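(* Assume the standing setting with $I$ an open interval (unbounded above), and that $X$ a.s. has no negative jumps. Let $v:I\to(0,\infty)$ and $\omega:I\to[0,\infty)$ be Lebesgue measurable with $\frac{1+\omega}{v}$ locally integrable on $I$ and $\int_{\inf I}^x\frac{dy}{v(y)}=\infty$ for some (equivalently all) $x\in I$; fix $\theta\in I$ and let $V(a):=\int_\theta^a\frac{dy}{v(y)}$, $a\in I$. Suppose that $$\mathbb{P}_x[e^{-qT_\ell^-};T_\ell^-<\zeta]=\exp\Big(-\int_0^{V(x)-V(\ell)}\omega\big(V^{-1}(V(x)-t)\big)dt-q\big(V(x)-V(\ell)\big)\Big)\quad\text{for all }\ell\le x\text{ in }I,\ q\in[0,\infty).$$ Then for every $x\in I$, under $\mathbb{P}_x$: $X_t=V^{-1}(V(x)-t)$ for all $t\in[0,\zeta)$ a.s., and $\mathbb{P}_x(t<\zeta)=\exp\big(-\int_0^t\omega(V^{-1}(V(x)-s))ds\big)$ for all $t\ge0$; i.e. $X$ has the law of the process which drifts downwards with speed $v(X_t)$ and is killed at rate $\omega(X_t)$.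
   Context: Standing setting: $I\subset\mathbb{R}$ is an interval unbounded above. $X=(X_t)_{t\in[0,\zeta)}$ is a process under complete probability measures $(\mathbb{P}_x)_{x\in I}$ (whose domains all contain $\mathcal{F}_\infty$), adapted to a filtration $\mathcal{F}=(\mathcal{F}_t)_{t\ge0}$ that is complete in the sense that each $\mathcal{F}_t$ contains every set differing from an event of $\mathcal{F}_t$ by a set that is $\mathbb{P}_x$-null for all $x\in I$. The lifetime $\zeta$ is an $\mathcal{F}$-stopping time with $\zeta>0$ a.s., and $X_t:=\infty$ (cemetery) for $t\ge\zeta$. "a.s." means $\mathbb{P}_x$-a.s. for every $x\in I$, and "negligible" means $\mathbb{P}_x$-null for every $x$. Assumptions: paths of $X$ are càdlàg in $I$ on $[0,\zeta)$; on $\{0<\zeta<\infty\}$ the limit $X_{\zeta-}$ exists in $I\cup\{\infty\}$ a.s. (set $X_{\zeta-}:=\infty$ when it does not exist); $x\mapsto\mathbb{P}_x(t<\zeta,X_t\in A)$ is universally measurable for Borel $A\subset I$; normality: $X_0=x$ $\mathbb{P}_x$-a.s.; strong Markov: for every $\mathcal{F}$-stopping time $S$ and measurable $H\ge0$, $\mathbb{P}_x[H(X_{S+\cdot})\mid\mathcal{F}_S]=\mathbb{P}_{X_S}[H(X)]$ $\mathbb{P}_x$-a.s. on $\{S<\zeta\}$; quasi left-continuity: if $\mathcal{F}$-stopping times $T_n$ increase a.s. to $T$ then $X_{T_n}\to X_T$ a.s. on $\{T<\zeta\}$; non-announceability: for every a.s. nondecreasing sequence $(T_n)$ of $\mathcal{F}$-stopping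 times, the event $\{T_n<\zeta\ \forall n\}\cap\{\lim_n T_n=\zeta\}\cap\{\zeta<\infty,X_{\zeta-}<\infty\}$ is negligible. Notation: $\mathbb{P}_x[Y;A]:=\mathbb{E}_x[Y\mathbf{1}_A]$; for $\ell\in I$, $T_\ell^-:=\inf\{t\in[0,\zeta):X_t\le\ell\}$ ($\inf\emptyset=\infty$). $V$ maps $I$ strictly increasingly onto an open interval unbounded below, and $V^{-1}$ is its inverse. *)

theory Defs
  imports "HOL-Probability.Probability"
begin

text \<open>A family of (complete) probability measures P x, x in I, on a common sample
space Omega; a filtration F indexed by t >= 0 (each F t a set of subsets of Omega);
a process X :: real => 'w => real, meaningful for t < zeta (the cemetery value
infinity for t >= zeta is modelled by the guard t < zeta); lifetime zeta :: 'w => ennreal.\<close>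

definition as_surely :: "real set \<Rightarrow> (real \<Rightarrow> 'w measure) \<Rightarrow> ('w \<Rightarrow> bool) \<Rightarrow> bool" where
  "as_surely I P \<phi> \<longleftrightarrow> (\<forall>x\<in>I. AE \<omega> in P x. \<phi> \<omega>)"

definition F_infty :: "'w set \<Rightarrow> (real \<Rightarrow> 'w set set) \<Rightarrow> 'w set set" where
  "F_infty \<Omega> F = sigma_sets \<Omega> (\<Union>t\<in>{0..}. F t)"

definition is_stopping_time :: "'w set \<Rightarrow> (real \<Rightarrow> 'w set set) \<Rightarrow> ('w \<Rightarrow> ennreal) \<Rightarrow> bool" where
  "is_stopping_time \<Omega> F T \<longleftrightarrow> (\<forall>t\<ge>0. {\<omega>\<in>\<Omega>. T \<omega> \<le> ennreal t} \<in> F t)"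

definition F_at :: "'w set \<Rightarrow> (real \<Rightarrow> 'w set set) \<Rightarrow> ('w \<Rightarrow> ennreal) \<Rightarrow> 'w set set" where
  "F_at \<Omega> F S = {A \<in> F_infty \<Omega> F. \<forall>t\<ge>0. A \<inter> {\<omega>\<in>\<Omega>. S \<omega> \<le> ennreal t} \<in> F t}"

text \<open>Path of X as an element of (I cup {infinity})^[0,infinity), the cemetery
being represented by the extended real infinity; path space with product sigma-algebra.\<close>
definition path_space :: "(real \<Rightarrow> ereal) measure" where
  "path_space = PiM {0..} (\<lambda>_. borel)"

definition Xpath :: "(real \<Rightarrow> 'w \<Rightarrow> real) \<Rightarrow> ('w \<Rightarrow> ennreal) \<Rightarrow> 'w \<Rightarrow> real \<Rightarrow> ereal" where
  "Xpath X \<zeta> \<omega> = (\<lambda>t\<in>{0..}. if ennreal t < \<zeta> \<omega> then ereal (X t \<omega>) else \<infinity>)"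

definition Xshift :: "(real \<Rightarrow> 'w \<Rightarrow> real) \<Rightarrow> ('w \<Rightarrow> ennreal) \<Rightarrow> ('w \<Rightarrow> ennreal) \<Rightarrow> 'w \<Rightarrow> real \<Rightarrow> ereal" where
  "Xshift X \<zeta> S \<omega> = (\<lambda>t\<in>{0..}. if ennreal (enn2real (S \<omega>) + t) < \<zeta> \<omega>
                                   then ereal (X (enn2real (S \<omega>) + t) \<omega>) else \<infinity>)"

definition univ_measurable_on :: "real set \<Rightarrow> (real \<Rightarrow> real) \<Rightarrow> bool" where
  "univ_measurable_on I f \<longleftrightarrow>
     (\<forall>\<mu>. finite_measure \<mu> \<and> sets \<mu> = sets (borel :: real measure) \<longrightarrow>
           (\<lambda>x. indicator I x * f x) \<in> borel_measurable (completion \<mu>))"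

definition standing_setting ::
  "real set \<Rightarrow> 'w set \<Rightarrow> (real \<Rightarrow> 'w set set) \<Rightarrow> (real \<Rightarrow> 'w measure)
     \<Rightarrow> (real \<Rightarrow> 'w \<Rightarrow> real) \<Rightarrow> ('w \<Rightarrow> ennreal) \<Rightarrow> bool" where
  "standing_setting I \<Omega> F P X \<zeta> \<longleftrightarrow>
     \<comment> \<open>I is an interval unbounded above\<close>
     is_interval I \<and> \<not> bdd_above I \<and>
     \<comment> \<open>filtration\<close>
     (\<forall>t\<ge>0. sigma_algebra \<Omega> (F t)) \<and>
     (\<forall>s t. 0 \<le> s \<longrightarrow> s \<le> t \<longrightarrow> F s \<subseteq> F t) \<and>
     \<comment> \<open>complete probability measures with domain containing F_infty\<close>
     (\<forall>x\<in>I. prob_space (P x) \<and> space (P x) = \<Omega> \<and> complete_measure (P x)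
             \<and> F_infty \<Omega> F \<subseteq> sets (P x)) \<and>
     \<comment> \<open>completeness of the filtration w.r.t. sets null for every P x\<close>
     (\<forall>t\<ge>0. \<forall>A\<in>F t. \<forall>B. B \<subseteq> \<Omega> \<longrightarrow>
         (\<forall>x\<in>I. (A - B) \<union> (B - A) \<in> null_sets (P x)) \<longrightarrow> B \<in> F t) \<and>
     \<comment> \<open>lifetime\<close>
     is_stopping_time \<Omega> F \<zeta> \<and>
     as_surely I P (\<lambda>\<omega>. 0 < \<zeta> \<omega>) \<and>
     \<comment> \<open>adaptedness\<close>
     (\<forall>t\<ge>0. \<forall>B\<in>sets borel. {\<omega>\<in>\<Omega>. ennreal t < \<zeta> \<omega> \<and> X t \<omega> \<in> B} \<in> F t) \<and>
     \<comment> \<open>paths cadlag in I on [0, zeta)\<close>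
     (\<forall>\<omega>\<in>\<Omega>. \<forall>t\<ge>0. ennreal t < \<zeta> \<omega> \<longrightarrow>
         X t \<omega> \<in> I \<and> continuous (at_right t) (\<lambda>s. X s \<omega>) \<and>
         (0 < t \<longrightarrow> (\<exists>l\<in>I. ((\<lambda>s. X s \<omega>) \<longlongrightarrow> l) (at_left t)))) \<and>
     \<comment> \<open>left limit at zeta exists in I cup {infinity} a.s. on {0 < zeta < infinity}\<close>
     as_surely I P (\<lambda>\<omega>. 0 < \<zeta> \<omega> \<and> \<zeta> \<omega> < \<infinity> \<longrightarrow>
         (\<exists>l\<in>I. ((\<lambda>s. X s \<omega>) \<longlongrightarrow> l) (at_left (enn2real (\<zeta> \<omega>))))
         \<or> filterlim (\<lambda>s. X s \<omega>) at_top (at_left (enn2real (\<zeta> \<omega>)))) \<and>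
     \<comment> \<open>universal measurability of x |-> P_x(t < zeta, X_t in A)\<close>
     (\<forall>t\<ge>0. \<forall>A\<in>sets borel. A \<subseteq> I \<longrightarrow>
         univ_measurable_on I (\<lambda>x. measure (P x) {\<omega>\<in>\<Omega>. ennreal t < \<zeta> \<omega> \<and> X t \<omega> \<in> A})) \<and>
     \<comment> \<open>normality\<close>
     (\<forall>x\<in>I. AE \<omega> in P x. 0 < \<zeta> \<omega> \<and> X 0 \<omega> = x) \<and>
     \<comment> \<open>strong Markov property: P_x[H(X_{S+.}) | F_S] = P_{X_S}[H(X)] a.s. on {S < zeta}\<close>
     (\<forall>S. is_stopping_time \<Omega> F S \<longrightarrow>
        (\<forall>H\<in>borel_measurable path_space. \<forall>x\<in>I.
          \<exists>g \<in> borel_measurable (sigma \<Omega> (F_at \<Omega> F S)).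
            (AE \<omega> in P x. S \<omega> < \<zeta> \<omega> \<longrightarrow>
               g \<omega> = (\<integral>\<^sup>+\<omega>'. (H (Xpath X \<zeta> \<omega>') :: ennreal) \<partial>P (X (enn2real (S \<omega>)) \<omega>))) \<and>
            (\<forall>A\<in>F_at \<Omega> F S.
               (\<integral>\<^sup>+\<omega>. indicator (A \<inter> {\<omega>. S \<omega> < \<zeta> \<omega>}) \<omega> * H (Xshift X \<zeta> S \<omega>) \<partial>P x)
             = (\<integral>\<^sup>+\<omega>. indicator (A \<inter> {\<omega>. S \<omega> < \<zeta> \<omega>}) \<omega> * g \<omega> \<partial>P x)))) \<and>
     \<comment> \<open>quasi left-continuity\<close>
     (\<forall>T Tn. (\<forall>n. is_stopping_time \<Omega> F (Tn n)) \<longrightarrow>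
        as_surely I P (\<lambda>\<omega>. incseq (\<lambda>n. Tn n \<omega>) \<and> (SUP n. Tn n \<omega>) = T \<omega>) \<longrightarrow>
        as_surely I P (\<lambda>\<omega>. T \<omega> < \<zeta> \<omega> \<longrightarrow>
           (\<lambda>n. X (enn2real (Tn n \<omega>)) \<omega>) \<longlonglongrightarrow> X (enn2real (T \<omega>)) \<omega>)) \<and>
     \<comment> \<open>non-announceability of finite killing from a point of I\<close>
     (\<forall>Tn. (\<forall>n. is_stopping_time \<Omega> F (Tn n)) \<longrightarrow>
        as_surely I P (\<lambda>\<omega>. incseq (\<lambda>n. Tn n \<omega>)) \<longrightarrow>
        as_surely I P (\<lambda>\<omega>. \<not> ((\<forall>n. Tn n \<omega> < \<zeta> \<omega>) \<and> (SUP n. Tn n \<omega>) = \<zeta> \<omega> \<and>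
             \<zeta> \<omega> < \<infinity> \<and> (\<exists>l\<in>I. ((\<lambda>s. X s \<omega>) \<longlongrightarrow> l) (at_left (enn2real (\<zeta> \<omega>)))))))"

text \<open>First passage time below level l: inf {t in [0,zeta) : X_t <= l}, inf of empty set = infinity.\<close>
definition Tminus :: "(real \<Rightarrow> 'w \<Rightarrow> real) \<Rightarrow> ('w \<Rightarrow> ennreal) \<Rightarrow> real \<Rightarrow> 'w \<Rightarrow> ennreal" where
  "Tminus X \<zeta> l \<omega> = Inf (ennreal ` {t. 0 \<le> t \<and> ennreal t < \<zeta> \<omega> \<and> X t \<omega> \<le> l})"

definition Vscale :: "(real \<Rightarrow> real) \<Rightarrow> real \<Rightarrow> real \<Rightarrow> real" where
  "Vscale v \<theta> a = (if \<theta> \<le> a then (LINT y:{\<theta>..a}|lebesgue. 1 / v y)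
                     else - (LINT y:{a..\<theta>}|lebesgue. 1 / v y))"

end

theory Submission
  imports Defs
begin


locale thm_ctx =
  fixes I :: "real set" and \<Omega> :: "'w set" and F :: "real \<Rightarrow> 'w set set"
    and P :: "real \<Rightarrow> 'w measure" and X :: "real \<Rightarrow> 'w \<Rightarrow> real" and \<zeta> :: "'w \<Rightarrow> ennreal"
    and v w :: "real \<Rightarrow> real" and \<theta> :: real and V :: "real \<Rightarrow> real"
  assumes setting: "standing_setting I \<Omega> F P X \<zeta>"
    and I_open: "open I"
    and v_meas: "v \<in> borel_measurable (restrict_space lebesgue I)"
    and v_pos: "\<forall>y\<in>I. 0 < v y"
    and w_nonneg: "\<forall>y\<in>I. 0 \<le> w y"
    and loc_int: "\<forall>a b. {a..b} \<subseteq> I \<longrightarrow> set_integrable lebesgue {a..b} (\<lambda>y. (1 + w y) / v y)"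
    and diverge: "\<exists>x\<in>I. (\<integral>\<^sup>+y. indicator {y\<in>I. y \<le> x} y * ennreal (1 / v y) \<partial>lebesgue) = \<infinity>"
    and theta: "\<theta> \<in> I"
    and V_def: "\<forall>a\<in>I. V a = Vscale v \<theta> a"
    and laplace: "\<forall>x\<in>I. \<forall>l\<in>I. l \<le> x \<longrightarrow> (\<forall>q\<ge>0.
         (\<integral>\<^sup>+\<omega>. indicator {\<omega>. Tminus X \<zeta> l \<omega> < \<zeta> \<omega>} \<omega>
                   * ennreal (exp (- q * enn2real (Tminus X \<zeta> l \<omega>))) \<partial>P x)
         = ennreal (exp (- (LINT t:{0..V x - V l}|lebesgue. w (inv_into I V (V x - t)))
                         - q * (V x - V l))))"
begin

lemma I_interval: "is_interval I" and I_unbdd: "\<not> bdd_above I"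
  using setting unfolding standing_setting_def by auto

lemma I_seg: assumes "a \<in> I" "b \<in> I" shows "{a..b} \<subseteq> I"
proof
  fix x assume "x \<in> {a..b}"
  thus "x \<in> I" using mem_is_interval_1_I[OF I_interval assms(1) assms(2)] by simp
qed

lemma I_up: assumes "a \<in> I" "a \<le> b" shows "b \<in> I"
proof -
  have "\<not> (\<forall>x\<in>I. x \<le> b)" using I_unbdd unfolding bdd_above_def by blast
  then obtain c where c: "c \<in> I" "\<not> c \<le> b" by blast
  show ?thesis using mem_is_interval_1_I[OF I_interval assms(1) c(1) assms(2)] c(2) by simp
qed

lemma I_sets: "I \<in> sets lebesgue"
  using I_open by (simp add: borel_open)

lemma vI_meas: "(\<lambda>y. if y \<in> I then v y else 1) \<in> borel_measurable lebesgue"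
  using v_meas measurable_restrict_space_iff[of I lebesgue 1 borel v] I_sets by simp

lemma f_meas: assumes "{a..b} \<subseteq> I" shows "set_borel_measurable lebesgue {a..b} (\<lambda>y. 1 / v y)"
proof -
  have "(\<lambda>y. indicator {a..b} y *\<^sub>R (1 / (if y \<in> I then v y else 1))) \<in> borel_measurable lebesgue"
  proof -
    have m1: "(\<lambda>y. 1 / (if y \<in> I then v y else 1)) \<in> borel_measurable lebesgue"
      using borel_measurable_divide[OF borel_measurable_const vI_meas] .
    show ?thesis by (intro borel_measurable_scaleR borel_measurable_indicator m1) simp
  qed
  moreover have "(\<lambda>y. indicator {a..b} y *\<^sub>R (1 / (if y \<in> I then v y else 1))) =
     (\<lambda>y. indicator {a..b} y *\<^sub>R (1 / v y))"
    using assms by (intro ext) (auto simp: indicator_def subset_iff)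
  ultimately show ?thesis unfolding set_borel_measurable_def by simp
qed

lemma f_int: assumes "a \<in> I" "b \<in> I" shows "set_integrable lebesgue {a..b} (\<lambda>y. 1 / v y)"
proof (rule set_integrable_bound[OF _ f_meas[OF I_seg[OF assms]]])
  show "set_integrable lebesgue {a..b} (\<lambda>y. (1 + w y) / v y)"
    using loc_int I_seg[OF assms] by auto
  show "AE y in lebesgue. y \<in> {a..b} \<longrightarrow> norm (1 / v y) \<le> norm ((1 + w y) / v y)"
  proof (rule AE_I2, rule impI)
    fix y assume "y \<in> {a..b}"
    hence "y \<in> I" using I_seg[OF assms] by auto
    hence "0 < v y" "0 \<le> w y" using v_pos w_nonneg by auto
    thus "norm (1 / v y) \<le> norm ((1 + w y) / v y)"
      by (simp add: divide_right_mono)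
  qed
qed

lemma f_henst: assumes "a \<in> I" "b \<in> I"
  shows "(\<lambda>y. 1 / v y) integrable_on {a..b}"
    "(LINT y:{a..b}|lebesgue. 1 / v y) = integral {a..b} (\<lambda>y. 1 / v y)"
  using set_lebesgue_integral_eq_integral[OF f_int[OF assms]] by auto

lemma V_eq: assumes "a \<in> I"
  shows "V a = (if \<theta> \<le> a then integral {\<theta>..a} (\<lambda>y. 1 / v y) else - integral {a..\<theta>} (\<lambda>y. 1 / v y))"
  using V_def assms f_henst[OF theta assms] f_henst[OF assms theta]
  unfolding Vscale_def by auto

lemma V_diff: assumes "a \<in> I" "b \<in> I" "a \<le> b"
  shows "V b - V a = integral {a..b} (\<lambda>y. 1 / v y)"
proof -
  let ?f = "\<lambda>y. 1 / v y"
  consider "\<theta> \<le> a" | "a < \<theta>" "\<theta> \<le> b" | "b < \<theta>" by linarith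
  thus ?thesis
  proof cases
    case 1
    have "integral {\<theta>..a} ?f + integral {a..b} ?f = integral {\<theta>..b} ?f"
      using Henstock_Kurzweil_Integration.integral_combine[OF 1 assms(3) f_henst(1)[OF theta assms(2)]] .
    moreover have "V a = integral {\<theta>..a} ?f" using V_eq[OF assms(1)] 1 by simp
    moreover have "V b = integral {\<theta>..b} ?f" using V_eq[OF assms(2)] 1 assms(3) by simp
    ultimately show ?thesis by linarith
  next
    case 2
    have "integral {a..\<theta>} ?f + integral {\<theta>..b} ?f = integral {a..b} ?f"
      using Henstock_Kurzweil_Integration.integral_combine[of a \<theta> b ?f] 2 f_henst(1)[OF assms(1,2)] by simp
    moreover have "V a = - integral {a..\<theta>} ?f" using V_eq[OF assms(1)] 2 by simp
    moreover have "V b = integral {\<theta>..b} ?f" using V_eq[OF assms(2)] 2 by simp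
    ultimately show ?thesis by linarith
  next
    case 3
    have "integral {a..b} ?f + integral {b..\<theta>} ?f = integral {a..\<theta>} ?f"
      using Henstock_Kurzweil_Integration.integral_combine[of a b \<theta> ?f] 3 assms(3) f_henst(1)[OF assms(1) theta] by simp
    moreover have "V a = - integral {a..\<theta>} ?f" using V_eq[OF assms(1)] 3 assms(3) by simp
    moreover have "V b = - integral {b..\<theta>} ?f" using V_eq[OF assms(2)] 3 by simp
    ultimately show ?thesis by linarith
  qed
qed


lemma int_pos: assumes "a \<in> I" "b \<in> I" "a < b"
  shows "0 < integral {a..b} (\<lambda>y. 1 / v y)"
proof -
  let ?g = "\<lambda>y. indicator {a..b} y *\<^sub>R (1 / v y)"
  have int: "integrable lebesgue ?g" using f_int[OF assms(1,2)] unfolding set_integrable_def .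
  have nn: "\<And>y. 0 \<le> ?g y"
  proof -
    fix y show "0 \<le> ?g y"
    proof (cases "y \<in> {a..b}")
      case True hence "y \<in> I" using I_seg[OF assms(1,2)] by auto
      hence "0 < v y" using v_pos by auto
      thus ?thesis using True by simp
    qed simp
  qed
  have eq: "integral {a..b} (\<lambda>y. 1 / v y) = integral\<^sup>L lebesgue ?g"
    using f_henst(2)[OF assms(1,2)] unfolding set_lebesgue_integral_def by simp
  have ge: "0 \<le> integral\<^sup>L lebesgue ?g" using nn by (simp add: integral_nonneg)
  have "integral\<^sup>L lebesgue ?g \<noteq> 0"
  proof
    assume "integral\<^sup>L lebesgue ?g = 0"
    hence "AE y in lebesgue. ?g y = 0"
      using integral_nonneg_eq_0_iff_AE[OF int] nn by simp
    hence ae: "AE y in lebesgue. y \<notin> {a..b}"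
    proof (rule AE_mp[OF _ AE_I2], intro impI)
      fix y assume "?g y = 0"
      thus "y \<notin> {a..b}"
      proof (intro notI)
        assume "y \<in> {a..b}"
        hence "y \<in> I" using I_seg[OF assms(1,2)] by auto
        hence "0 < v y" using v_pos by auto
        thus False using \<open>?g y = 0\<close> \<open>y \<in> {a..b}\<close> by simp
      qed
    qed
    have sets: "{a..b} \<in> sets lebesgue" by simp
    have eqset: "{y \<in> space lebesgue. \<not> (y \<notin> {a..b})} = {a..b}" by auto
    have "emeasure lebesgue {a..b} = 0" using AE_iff_measurable[OF sets eqset] ae by blast
    moreover have "emeasure lebesgue {a..b} = ennreal (b - a)"
      using assms(3) by simp
    ultimately show False using assms(3) by simp
  qed
  thus ?thesis using ge eq by simp
qed

lemma V_less: assumes "a \<in> I" "b \<in> I" "a < b" shows "V a < V b"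
  using V_diff[OF assms(1,2)] int_pos[OF assms] assms(3) by simp

lemma V_less_iff: assumes "a \<in> I" "b \<in> I" shows "V a < V b \<longleftrightarrow> a < b"
  using V_less assms by (metis not_less_iff_gr_or_eq order_less_asym)

lemma V_le_iff: assumes "a \<in> I" "b \<in> I" shows "V a \<le> V b \<longleftrightarrow> a \<le> b"
  using V_less_iff assms by (meson not_less)

lemma V_inj: "inj_on V I"
  unfolding inj_on_def using V_less by (metis linorder_neqE_linordered_idom order_less_irrefl)

lemma V_cont: assumes "a \<in> I" "b \<in> I" shows "continuous_on {a..b} V"
proof (rule continuous_on_eq)
  show "continuous_on {a..b} (\<lambda>u. V a + integral {a..u} (\<lambda>y. 1 / v y))"
    by (intro continuous_intros indefinite_integral_continuous_1 f_henst(1)[OF assms])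
  fix u assume "u \<in> {a..b}"
  hence "u \<in> I" "a \<le> u" using I_seg[OF assms] by auto
  thus "V a + integral {a..u} (\<lambda>y. 1 / v y) = V u" using V_diff[OF assms(1) \<open>u \<in> I\<close>] by simp
qed

lemma I_cases: "I = UNIV \<or> (\<exists>a. I = {a<..})"
proof (cases "bdd_below I")
  case True
  define a where "a = Inf I"
  have "I = {a<..}"
  proof
    show "I \<subseteq> {a<..}"
    proof
      fix y assume y: "y \<in> I"
      have "a \<le> y" unfolding a_def using True y by (simp add: cInf_lower)
      moreover have "a \<noteq> y"
      proof
        assume "a = y"
        then obtain e where "e > 0" "ball a e \<subseteq> I" using I_open y openE by blast
        hence "a - e/2 \<in> I" by (auto simp: dist_real_def)
        hence "a \<le> a - e/2" unfolding a_def using True by (simp add: cInf_lower)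
        thus False using \<open>e > 0\<close> by simp
      qed
      ultimately show "y \<in> {a<..}" by simp
    qed
    show "{a<..} \<subseteq> I"
    proof
      fix y assume "y \<in> {a<..}"
      hence "Inf I < y" unfolding a_def by simp
      then obtain p where "p \<in> I" "p < y" using cInf_less_iff[of I y] True theta by blast
      thus "y \<in> I" using I_up by auto
    qed
  qed
  thus ?thesis by blast
next
  case False
  have "I = UNIV"
  proof (intro set_eqI iffI)
    fix y :: real
    have "\<not> (\<forall>x\<in>I. y \<le> x)" using False unfolding bdd_below_def by blast
    then obtain p where "p \<in> I" "\<not> y \<le> p" by blast
    thus "y \<in> I" using I_up by auto
  qed simp
  thus ?thesis by blast
qed

lemma Fn_int: assumes "a \<in> I" "b \<in> I"
  shows "(\<integral>\<^sup>+y. indicator {a..b} y * ennreal (1 / v y) \<partial>lebesgue) = ennreal (integral {a..b} (\<lambda>y. 1 / v y))"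
proof -
  let ?g = "\<lambda>y. indicator {a..b} y *\<^sub>R (1 / v y)"
  have int: "integrable lebesgue ?g" using f_int[OF assms(1,2)] unfolding set_integrable_def .
  have nn: "\<And>y. 0 \<le> ?g y"
  proof -
    fix y show "0 \<le> ?g y"
    proof (cases "y \<in> {a..b}")
      case True hence "y \<in> I" using I_seg[OF assms(1,2)] by auto
      hence "0 < v y" using v_pos by auto
      thus ?thesis using True by simp
    qed simp
  qed
  have "(\<integral>\<^sup>+y. indicator {a..b} y * ennreal (1 / v y) \<partial>lebesgue) = (\<integral>\<^sup>+y. ennreal (?g y) \<partial>lebesgue)"
    by (intro nn_integral_cong) (simp add: indicator_def)
  also have "\<dots> = ennreal (integral\<^sup>L lebesgue ?g)"
    using nn_integral_eq_integral[OF int] nn by simp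
  also have "integral\<^sup>L lebesgue ?g = integral {a..b} (\<lambda>y. 1 / v y)"
    using f_henst(2)[OF assms(1,2)] unfolding set_lebesgue_integral_def by simp
  finally show ?thesis .
qed

lemma Fn_meas: assumes "a \<in> I" "b \<in> I"
  shows "(\<lambda>y. indicator {a..b} y * ennreal (1 / v y)) \<in> borel_measurable lebesgue"
proof -
  have m: "(\<lambda>y. indicator {a..b} y *\<^sub>R (1 / v y)) \<in> borel_measurable lebesgue"
    using f_meas[OF I_seg[OF assms]] unfolding set_borel_measurable_def .
  have "(\<lambda>y. ennreal (indicator {a..b} y *\<^sub>R (1 / v y))) \<in> borel_measurable lebesgue"
    using measurable_compose[OF m measurable_ennreal] by simp
  moreover have "(\<lambda>y. ennreal (indicator {a..b} y *\<^sub>R (1 / v y))) = (\<lambda>y. indicator {a..b} y * ennreal (1 / v y))"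
    by (intro ext) (simp add: indicator_def)
  ultimately show ?thesis by simp
qed

lemma exhaust_seq: assumes "x0 \<in> I"
  obtains e :: "nat \<Rightarrow> real" where "\<And>n. e n \<in> I" "\<And>n. e n \<le> x0" "\<And>n. e (Suc n) \<le> e n"
    "\<And>y. y \<in> I \<Longrightarrow> \<exists>n. e n \<le> y"
proof -
  consider "I = UNIV" | a where "I = {a<..}" using I_cases by blast
  thus ?thesis
  proof cases
    case 1
    show ?thesis
    proof (rule that[of "\<lambda>n. x0 - real n"])
      fix y :: real
      obtain n where "x0 - y < real n" using reals_Archimedean2 by blast
      thus "\<exists>n. x0 - real n \<le> y" by (intro exI[of _ n]) simp
    qed (auto simp: 1)
  next
    case 2
    have ax: "a < x0" using assms 2 by simp
    show ?thesis
    proof (rule that[of "\<lambda>n. a + (x0 - a) / real (Suc n)"])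
      fix n
      have "0 < (x0 - a) / real (Suc n)" using ax by simp
      thus "a + (x0 - a) / real (Suc n) \<in> I" using 2 by simp
      have "(x0 - a) / real (Suc n) \<le> (x0 - a) / 1"
        using ax by (intro divide_left_mono) auto
      thus "a + (x0 - a) / real (Suc n) \<le> x0" by simp
      show "a + (x0 - a) / real (Suc (Suc n)) \<le> a + (x0 - a) / real (Suc n)"
        using ax by (simp add: divide_left_mono)
    next
      fix y assume "y \<in> I"
      hence ya: "0 < y - a" using 2 by simp
      obtain n where n: "(x0 - a) / (y - a) < real n" using reals_Archimedean2 by blast
      hence "x0 - a < real n * (y - a)" using ya by (simp add: field_simps)
      also have "\<dots> \<le> real (Suc n) * (y - a)" using ya by (intro mult_right_mono) auto
      finally have "(x0 - a) / real (Suc n) \<le> y - a" by (simp add: field_simps)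
      thus "\<exists>n. a + (x0 - a) / real (Suc n) \<le> y" by (intro exI[of _ n]) simp
    qed
  qed
qed


lemma V_unbdd0: obtains x0 where "x0 \<in> I" "\<And>s. \<exists>a\<in>I. a \<le> x0 \<and> V a \<le> V x0 - s"
proof -
  obtain x0 where x0: "x0 \<in> I" and inf: "(\<integral>\<^sup>+y. indicator {y\<in>I. y \<le> x0} y * ennreal (1 / v y) \<partial>lebesgue) = \<infinity>"
    using diverge by blast
  have "\<exists>a\<in>I. a \<le> x0 \<and> V a \<le> V x0 - s" for s
  proof (rule ccontr)
    assume "\<not> (\<exists>a\<in>I. a \<le> x0 \<and> V a \<le> V x0 - s)"
    hence H: "\<And>a. a \<in> I \<Longrightarrow> a \<le> x0 \<Longrightarrow> V x0 - s < V a" by force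
    obtain e :: "nat \<Rightarrow> real" where e1: "\<And>n. e n \<in> I" and e2: "\<And>n. e n \<le> x0"
      and e3: "\<And>n. e (Suc n) \<le> e n" and e4: "\<And>y. y \<in> I \<Longrightarrow> \<exists>n. e n \<le> y"
      using exhaust_seq[OF x0] by blast
    define G where "G = (\<lambda>n y. indicator {e n..x0} y * ennreal (1 / v y))"
    have bound: "integral\<^sup>N lebesgue (G n) \<le> ennreal (max s 0)" for n
    proof -
      have "integral\<^sup>N lebesgue (G n) = ennreal (integral {e n..x0} (\<lambda>y. 1 / v y))"
        unfolding G_def using Fn_int[OF e1 x0] .
      also have "integral {e n..x0} (\<lambda>y. 1 / v y) = V x0 - V (e n)"
        using V_diff[OF e1 x0 e2] by simp
      also have "\<dots> \<le> max s 0" using H[OF e1[of n] e2[of n]] by simp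
      finally show ?thesis by (simp add: ennreal_leI)
    qed
    have inc: "incseq G"
    proof (rule incseq_SucI, rule le_funI)
      fix n y
      show "G n y \<le> G (Suc n) y" unfolding G_def using e3[of n] by (auto simp: indicator_def)
    qed
    have meas: "\<And>n. G n \<in> borel_measurable lebesgue"
      unfolding G_def using Fn_meas[OF e1 x0] by simp
    have sup: "(\<lambda>y. SUP n. G n y) = (\<lambda>y. indicator {y\<in>I. y \<le> x0} y * ennreal (1 / v y))"
    proof (rule ext)
      fix y
      show "(SUP n. G n y) = indicator {y\<in>I. y \<le> x0} y * ennreal (1 / v y)"
      proof (cases "y \<in> I \<and> y \<le> x0")
        case True
        then obtain n where n: "e n \<le> y" using e4 by blast
        have "(SUP n. G n y) = ennreal (1 / v y)"
        proof (rule antisym)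
          show "(SUP n. G n y) \<le> ennreal (1 / v y)"
            by (rule SUP_least) (simp add: G_def indicator_def)
          show "ennreal (1 / v y) \<le> (SUP n. G n y)"
            using n True by (intro SUP_upper2[of n]) (auto simp: G_def indicator_def)
        qed
        thus ?thesis using True by simp
      next
        case False
        have "G n y = 0" for n
        proof (cases "y \<in> {e n..x0}")
          case True
          hence "y \<in> I" using I_seg[OF e1[of n] x0] by auto
          thus ?thesis using True False by auto
        qed (simp add: G_def)
        thus ?thesis using False by simp
      qed
    qed
    have "(\<integral>\<^sup>+y. indicator {y\<in>I. y \<le> x0} y * ennreal (1 / v y) \<partial>lebesgue) = (\<integral>\<^sup>+y. (SUP n. G n y) \<partial>lebesgue)"
      using sup by simp
    also have "\<dots> = (SUP n. integral\<^sup>N lebesgue (G n))"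
      by (rule nn_integral_monotone_convergence_SUP[OF inc meas])
    also have "\<dots> \<le> ennreal (max s 0)" by (rule SUP_least) (rule bound)
    finally have "\<top> \<le> ennreal (max s 0)" using inf by simp
    thus False by (simp add: top_unique)
  qed
  thus ?thesis using that x0 by blast
qed

lemma V_unbdd: assumes "x \<in> I" "0 \<le> s" shows "\<exists>a\<in>I. a \<le> x \<and> V a \<le> V x - s"
proof -
  obtain x0 where x0: "x0 \<in> I" and H: "\<And>s. \<exists>a\<in>I. a \<le> x0 \<and> V a \<le> V x0 - s"
    using V_unbdd0 by blast
  show ?thesis
  proof (cases "x0 \<le> x")
    case True
    obtain a where a: "a \<in> I" "a \<le> x0" "V a \<le> V x0 - s" using H by blast
    have "V x0 \<le> V x" using V_le_iff[OF x0 assms(1)] True by simp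
    thus ?thesis using a True by (intro bexI[of _ a]) auto
  next
    case False
    obtain a where a: "a \<in> I" "a \<le> x0" "V a \<le> V x0 - (s + (V x0 - V x))" using H by blast
    have "a \<le> x"
    proof (rule ccontr)
      assume "\<not> a \<le> x"
      hence "V x < V a" using V_less[OF assms(1) a(1)] by simp
      thus False using a(3) assms(2) by simp
    qed
    thus ?thesis using a by (intro bexI[of _ a]) auto
  qed
qed

lemma V_surj: assumes "x \<in> I" "0 \<le> s" shows "\<exists>u\<in>I. u \<le> x \<and> V u = V x - s"
proof -
  obtain a where a: "a \<in> I" "a \<le> x" "V a \<le> V x - s" using V_unbdd[OF assms] by blast
  obtain u where u: "a \<le> u" "u \<le> x" "V u = V x - s"
    using IVT'[of V a "V x - s" x] a assms(2) V_cont[OF a(1) assms(1)] by auto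
  have "u \<in> I" using I_seg[OF a(1) assms(1)] u by auto
  thus ?thesis using u by blast
qed

definition yy :: "real \<Rightarrow> real \<Rightarrow> real" where "yy x s = inv_into I V (V x - s)"

lemma yy: assumes "x \<in> I" "0 \<le> s" shows "yy x s \<in> I" "V (yy x s) = V x - s"
proof -
  have "V x - s \<in> V ` I" using V_surj[OF assms] by force
  thus "yy x s \<in> I" "V (yy x s) = V x - s" unfolding yy_def
    by (auto intro: inv_into_into f_inv_into_f)
qed

lemma yy_le: assumes "x \<in> I" "0 \<le> s" shows "yy x s \<le> x"
  using V_le_iff[OF yy(1)[OF assms] assms(1)] yy(2)[OF assms] assms(2) by simp

lemma yy_anti: assumes "x \<in> I" "0 \<le> s" "s \<le> s'" shows "yy x s' \<le> yy x s"
proof -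
  have "0 \<le> s'" using assms by simp
  thus ?thesis using V_le_iff[OF yy(1)[OF assms(1) \<open>0 \<le> s'\<close>] yy(1)[OF assms(1,2)]]
      yy(2)[OF assms(1) \<open>0 \<le> s'\<close>] yy(2)[OF assms(1,2)] assms(3) by simp
qed

lemma yy_strict: assumes "x \<in> I" "0 \<le> s" "s < s'" shows "yy x s' < yy x s"
proof -
  have "0 \<le> s'" using assms by simp
  thus ?thesis using V_less_iff[OF yy(1)[OF assms(1) \<open>0 \<le> s'\<close>] yy(1)[OF assms(1,2)]]
      yy(2)[OF assms(1) \<open>0 \<le> s'\<close>] yy(2)[OF assms(1,2)] assms(3) by simp
qed

lemma yy_V: assumes "x \<in> I" "u \<in> I" "u \<le> x" shows "yy x (V x - V u) = u"
proof -
  have "V u \<le> V x" using V_le_iff assms by simp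
  hence "V (yy x (V x - V u)) = V u" using yy(2)[OF assms(1)] by simp
  moreover have "yy x (V x - V u) \<in> I" using yy(1)[OF assms(1)] \<open>V u \<le> V x\<close> by simp
  ultimately show ?thesis using V_inj assms(2) unfolding inj_on_def by blast
qed

end

context thm_ctx begin

lemma Pprop: assumes "x \<in> I"
  shows "prob_space (P x)" "space (P x) = \<Omega>" "F_infty \<Omega> F \<subseteq> sets (P x)"
  using setting assms unfolding standing_setting_def by auto

lemma adapted: assumes "0 \<le> t" "B \<in> sets borel"
  shows "{\<omega>\<in>\<Omega>. ennreal t < \<zeta> \<omega> \<and> X t \<omega> \<in> B} \<in> F t"
  using setting assms unfolding standing_setting_def by auto

lemma paths: assumes "\<omega> \<in> \<Omega>" "0 \<le> t" "ennreal t < \<zeta> \<omega>"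
  shows "X t \<omega> \<in> I" "continuous (at_right t) (\<lambda>s. X s \<omega>)"
  using setting assms unfolding standing_setting_def by auto

lemma sa: "0 \<le> t \<Longrightarrow> sigma_algebra \<Omega> (F t)"
  using setting unfolding standing_setting_def by auto

lemma Fmono: "0 \<le> s \<Longrightarrow> s \<le> t \<Longrightarrow> F s \<subseteq> F t"
  using setting unfolding standing_setting_def by auto

lemma F_infty_sub: assumes "0 \<le> t" shows "F t \<subseteq> F_infty \<Omega> F"
  unfolding F_infty_def using assms by (auto intro: sigma_sets.Basic)

lemma Fsets: assumes "x \<in> I" "0 \<le> t" "A \<in> F t" shows "A \<in> sets (P x)"
  using F_infty_sub[OF assms(2)] Pprop(3)[OF assms(1)] assms(3) by auto

lemma ev_less_sets: assumes "x \<in> I" "0 \<le> t"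
  shows "{\<omega>\<in>\<Omega>. ennreal t < \<zeta> \<omega> \<and> X t \<omega> < l} \<in> sets (P x)"
  using Fsets[OF assms adapted[OF assms(2), of "{..<l}"]] by simp

lemma ev_gt_sets: assumes "x \<in> I" "0 \<le> t"
  shows "{\<omega>\<in>\<Omega>. ennreal t < \<zeta> \<omega> \<and> l < X t \<omega>} \<in> sets (P x)"
  using Fsets[OF assms adapted[OF assms(2), of "{l<..}"]] by simp

lemma ev_alive_sets: assumes "x \<in> I" "0 \<le> t"
  shows "{\<omega>\<in>\<Omega>. ennreal t < \<zeta> \<omega>} \<in> sets (P x)"
  using Fsets[OF assms adapted[OF assms(2), of "UNIV"]] by simp

lemma rat_right: assumes "eventually Q (at_right s)" "s < b"
  shows "\<exists>r\<in>\<rat>. s < r \<and> r < b \<and> Q (r::real)"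
proof -
  obtain c where c: "c > s" "\<And>y. y > s \<Longrightarrow> y < c \<Longrightarrow> Q y"
    using assms(1) unfolding eventually_at_right_field by blast
  obtain r where r: "r \<in> \<rat>" "s < r" "r < min b c" using Rats_dense_in_real[of s "min b c"] c assms(2) by auto
  thus ?thesis using c by auto
qed

lemma ev_zeta: assumes "0 \<le> s" "ennreal s < \<zeta> \<omega>"
  shows "eventually (\<lambda>r. ennreal r < \<zeta> \<omega>) (at_right s)"
proof -
  obtain e where e: "ennreal s < e" "e < \<zeta> \<omega>" using dense assms(2) by blast
  have "e \<noteq> top" using e(2) top.not_eq_extremum by fastforce
  then obtain u where u: "e = ennreal u" "0 \<le> u" using ennreal_cases[of e] by auto
  have su: "s < u" using e(1) u assms(1) ennreal_less_iff by simp
  show ?thesis unfolding eventually_at_right_field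
  proof (intro exI[of _ u] conjI allI impI)
    fix y assume "s < y" "y < u"
    hence "ennreal y < ennreal u" using assms(1) by (simp add: ennreal_lessI)
    thus "ennreal y < \<zeta> \<omega>" using e u by simp
  qed (use su in auto)
qed

lemma ev_Xless: assumes "\<omega> \<in> \<Omega>" "0 \<le> s" "ennreal s < \<zeta> \<omega>" "X s \<omega> < l"
  shows "eventually (\<lambda>r. X r \<omega> < l) (at_right s)"
proof -
  have "((\<lambda>r. X r \<omega>) \<longlongrightarrow> X s \<omega>) (at_right s)"
    using paths(2)[OF assms(1-3)] unfolding continuous_within by simp
  thus ?thesis using assms(4) order_tendstoD(2) by blast
qed

lemma ev_Xgt: assumes "\<omega> \<in> \<Omega>" "0 \<le> s" "ennreal s < \<zeta> \<omega>" "l < X s \<omega>"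
  shows "eventually (\<lambda>r. l < X r \<omega>) (at_right s)"
proof -
  have "((\<lambda>r. X r \<omega>) \<longlongrightarrow> X s \<omega>) (at_right s)"
    using paths(2)[OF assms(1-3)] unfolding continuous_within by simp
  thus ?thesis using assms(4) order_tendstoD(1) by blast
qed

lemma rat_near: assumes "\<omega> \<in> \<Omega>" "0 \<le> s" "ennreal s < \<zeta> \<omega>" "X s \<omega> < l" "s < b"
  shows "\<exists>r\<in>\<rat>. s < r \<and> r < b \<and> ennreal r < \<zeta> \<omega> \<and> X r \<omega> < l"
  using rat_right[OF eventually_conj[OF ev_zeta[OF assms(2,3)] ev_Xless[OF assms(1-4)]] assms(5)] by blast

lemma rat_near_gt: assumes "\<omega> \<in> \<Omega>" "0 \<le> s" "ennreal s < \<zeta> \<omega>" "l < X s \<omega>" "s < b"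
  shows "\<exists>r\<in>\<rat>. s < r \<and> r < b \<and> ennreal r < \<zeta> \<omega> \<and> l < X r \<omega>"
  using rat_right[OF eventually_conj[OF ev_zeta[OF assms(2,3)] ev_Xgt[OF assms(1-4)]] assms(5)] by blast

definition Sset :: "real \<Rightarrow> 'w \<Rightarrow> real set" where
  "Sset l \<omega> = {t. 0 \<le> t \<and> ennreal t < \<zeta> \<omega> \<and> X t \<omega> \<le> l}"

lemma T_eq: "Tminus X \<zeta> l \<omega> = Inf (ennreal ` Sset l \<omega>)"
  unfolding Tminus_def Sset_def by simp

lemma T_le: "t \<in> Sset l \<omega> \<Longrightarrow> Tminus X \<zeta> l \<omega> \<le> ennreal t"
  unfolding T_eq by (rule Inf_lower) simp

lemma T_less_ex: "Tminus X \<zeta> l \<omega> < \<zeta> \<omega> \<Longrightarrow> \<exists>t. t \<in> Sset l \<omega>"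
  unfolding T_eq by (auto simp: Inf_less_iff)

lemma T_ge: "(\<And>t. t \<in> Sset l \<omega> \<Longrightarrow> c \<le> t) \<Longrightarrow> ennreal c \<le> Tminus X \<zeta> l \<omega>"
  unfolding T_eq by (rule Inf_greatest) (auto intro: ennreal_leI)

lemma enn2real_le_of: assumes "T \<le> ennreal r" "0 \<le> r" shows "enn2real T \<le> r"
  using enn2real_mono[OF assms(1)] assms(2) by simp

lemma enn2real_ge_of: assumes "ennreal c \<le> T" "T < \<infinity>" "0 \<le> c" shows "c \<le> enn2real T"
  using enn2real_mono[OF assms(1)] assms by simp

definition Ebad :: "real \<Rightarrow> real \<Rightarrow> 'w set" where
  "Ebad l D = {\<omega>\<in>\<Omega>. \<exists>r\<in>\<rat>. 0 \<le> r \<and> r < D \<and> ennreal r < \<zeta> \<omega> \<and> X r \<omega> < l}"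

lemma Ebad_sets: assumes "x \<in> I" shows "Ebad l D \<in> sets (P x)"
proof -
  have "Ebad l D = (\<Union>r\<in>{r\<in>\<rat>. 0 \<le> r \<and> r < D}. {\<omega>\<in>\<Omega>. ennreal r < \<zeta> \<omega> \<and> X r \<omega> < l})"
    unfolding Ebad_def by auto
  also have "\<dots> \<in> sets (P x)"
    by (rule sets.countable_UN'') (auto intro: countable_subset[OF _ countable_rat] ev_less_sets[OF assms])
  finally show ?thesis .
qed

definition cc :: "real \<Rightarrow> real \<Rightarrow> real" where
  "cc x l = exp (- (LINT t:{0..V x - V l}|lebesgue. w (inv_into I V (V x - t))))"

lemma lap: assumes "x \<in> I" "l \<in> I" "l \<le> x" "0 \<le> q"
  shows "(\<integral>\<^sup>+\<omega>. indicator {\<omega>. Tminus X \<zeta> l \<omega> < \<zeta> \<omega>} \<omega>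
                   * ennreal (exp (- q * enn2real (Tminus X \<zeta> l \<omega>))) \<partial>P x)
         = ennreal (cc x l * exp (- q * (V x - V l)))"
  using laplace assms unfolding cc_def by (simp add: mult_exp_exp)

lemma lap0: assumes "x \<in> I" "l \<in> I" "l \<le> x"
  shows "(\<integral>\<^sup>+\<omega>. indicator {\<omega>. Tminus X \<zeta> l \<omega> < \<zeta> \<omega>} \<omega> \<partial>P x) = ennreal (cc x l)"
  using lap[OF assms order_refl] by simp

lemma lower_null: assumes "z \<in> I" "l \<in> I" "l \<le> z" "D < V z - V l"
  shows "emeasure (P z) (Ebad l D) = 0"
proof -
  interpret ps: prob_space "P z" using Pprop[OF assms(1)] by simp
  have sp: "space (P z) = \<Omega>" using Pprop[OF assms(1)] by simp
  let ?E = "Ebad l D"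
  let ?m = "measure (P z) ?E"
  define k where "k = V z - V l - D"
  have k: "0 < k" using assms(4) k_def by simp
  have C: "0 < cc z l" unfolding cc_def by simp
  show ?thesis
  proof (cases "D \<le> 0")
    case True
    hence "?E = {}" unfolding Ebad_def by auto
    thus ?thesis by simp
  next
    case False
    have bound: "?m \<le> cc z l * exp (- q * k)" if q: "0 \<le> q" for q
    proof -
      have "(\<integral>\<^sup>+\<omega>. ennreal (exp (- q * D)) * indicator ?E \<omega> \<partial>P z) \<le>
            (\<integral>\<^sup>+\<omega>. indicator {\<omega>. Tminus X \<zeta> l \<omega> < \<zeta> \<omega>} \<omega>
                   * ennreal (exp (- q * enn2real (Tminus X \<zeta> l \<omega>))) \<partial>P z)"
      proof (rule nn_integral_mono)
        fix \<omega> assume "\<omega> \<in> space (P z)"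
        show "ennreal (exp (- q * D)) * indicator ?E \<omega> \<le> indicator {\<omega>. Tminus X \<zeta> l \<omega> < \<zeta> \<omega>} \<omega>
                   * ennreal (exp (- q * enn2real (Tminus X \<zeta> l \<omega>)))"
        proof (cases "\<omega> \<in> ?E")
          case True
          then obtain r where r: "r \<in> \<rat>" "0 \<le> r" "r < D" "ennreal r < \<zeta> \<omega>" "X r \<omega> < l"
            unfolding Ebad_def by blast
          have "r \<in> Sset l \<omega>" using r unfolding Sset_def by simp
          hence Tle: "Tminus X \<zeta> l \<omega> \<le> ennreal r" by (rule T_le)
          hence Tlt: "Tminus X \<zeta> l \<omega> < \<zeta> \<omega>" using r(4) by simp
          have "enn2real (Tminus X \<zeta> l \<omega>) \<le> r" using enn2real_le_of[OF Tle r(2)] .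
          hence "- q * D \<le> - q * enn2real (Tminus X \<zeta> l \<omega>)" using r(3) q
            by (simp add: mult_left_mono)
          hence "exp (- q * D) \<le> exp (- q * enn2real (Tminus X \<zeta> l \<omega>))" by simp
          thus ?thesis using True Tlt by (simp add: ennreal_leI)
        qed simp
      qed
      also have "\<dots> = ennreal (cc z l * exp (- q * (V z - V l)))"
        using lap[OF assms(1-3) q] .
      finally have "ennreal (exp (- q * D)) * emeasure (P z) ?E \<le> ennreal (cc z l * exp (- q * (V z - V l)))"
        using nn_integral_cmult_indicator[OF Ebad_sets[OF assms(1)]] by simp
      hence "ennreal (exp (- q * D) * ?m) \<le> ennreal (cc z l * exp (- q * (V z - V l)))"
        using ps.emeasure_eq_measure by (simp add: ennreal_mult)
      hence "exp (- q * D) * ?m \<le> cc z l * exp (- q * (V z - V l))"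
        using C by (simp add: ennreal_le_iff)
      hence "?m \<le> cc z l * exp (- q * (V z - V l)) / exp (- q * D)"
        by (simp add: field_simps)
      also have "cc z l * exp (- q * (V z - V l)) / exp (- q * D) = cc z l * exp (- q * k)"
      proof -
        have "exp (- q * (V z - V l)) / exp (- q * D) = exp (- q * (V z - V l) - (- q * D))"
          by (rule exp_diff[symmetric])
        also have "\<dots> = exp (- q * k)" unfolding k_def by (simp add: algebra_simps)
        finally show ?thesis by (metis times_divide_eq_right)
      qed
      finally show ?thesis .
    qed
    have "?m \<le> 0"
    proof (rule ccontr)
      assume "\<not> ?m \<le> 0"
      hence mpos: "0 < ?m" by simp
      define q where "q = cc z l / (?m * k)"
      have q0: "0 \<le> q" unfolding q_def using C mpos k by simp
      have "?m * exp (q * k) \<le> cc z l"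
        using bound[OF q0] by (simp add: field_simps exp_minus)
      moreover have "?m * (1 + q * k) \<le> ?m * exp (q * k)"
        using mpos by (intro mult_left_mono) auto
      moreover have "?m * (1 + q * k) = ?m + cc z l"
        unfolding q_def using mpos k by (simp add: field_simps)
      ultimately show False using mpos by simp
    qed
    hence "?m = 0" by (simp add: antisym)
    thus ?thesis using ps.emeasure_eq_measure by simp
  qed
qed

end

context thm_ctx begin

lemma lower_AE: assumes z: "z \<in> I"
  shows "AE \<omega> in P z. \<forall>s\<ge>0. ennreal s < \<zeta> \<omega> \<longrightarrow> yy z s \<le> X s \<omega>"
proof -
  let ?Q = "{p. fst p \<in> \<rat> \<and> snd p \<in> \<rat> \<and> fst p \<in> I \<and> fst p \<le> z \<and> snd p < V z - V (fst p)}"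
  have cnt: "countable ?Q"
    by (rule countable_subset[of _ "\<rat> \<times> \<rat>"]) (auto intro: countable_rat)
  have sp: "space (P z) = \<Omega>" using Pprop[OF z] by simp
  have H: "AE \<omega> in P z. \<forall>p\<in>?Q. \<omega> \<notin> Ebad (fst p) (snd p)"
  proof (rule AE_ball_countable'[OF _ cnt])
    fix p assume "p \<in> ?Q"
    thus "AE \<omega> in P z. \<omega> \<notin> Ebad (fst p) (snd p)"
      by (intro AE_not_in null_setsI lower_null Ebad_sets z) auto
  qed
  show ?thesis
    using H AE_space
  proof eventually_elim
    case (elim \<omega>)
    hence om: "\<omega> \<in> \<Omega>" using sp by simp
    show ?case
    proof (intro allI impI)
      fix s :: real assume s: "0 \<le> s" "ennreal s < \<zeta> \<omega>"
      show "yy z s \<le> X s \<omega>"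
      proof (rule ccontr)
        assume "\<not> yy z s \<le> X s \<omega>"
        hence lt: "X s \<omega> < yy z s" by simp
        have XI: "X s \<omega> \<in> I" using paths(1)[OF om s] .
        have yI: "yy z s \<in> I" and yV: "V (yy z s) = V z - s" using yy[OF z s(1)] by auto
        obtain l where l: "l \<in> \<rat>" "X s \<omega> < l" "l < yy z s" using Rats_dense_in_real[OF lt] by blast
        have lI: "l \<in> I" using I_seg[OF XI yI] l by auto
        have lz: "l \<le> z" using yy_le[OF z s(1)] l by simp
        have "V l < V (yy z s)" using V_less[OF lI yI l(3)] .
        hence sl: "s < V z - V l" using yV by simp
        obtain D where D: "D \<in> \<rat>" "s < D" "D < V z - V l" using Rats_dense_in_real[OF sl] by blast
        obtain r where r: "r \<in> \<rat>" "s < r" "r < D" "ennreal r < \<zeta> \<omega>" "X r \<omega> < l"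
          using rat_near[OF om s l(2) D(2)] by blast
        have "\<exists>r\<in>\<rat>. 0 \<le> r \<and> r < D \<and> ennreal r < \<zeta> \<omega> \<and> X r \<omega> < l"
          using r s(1) by (intro bexI[of _ r]) auto
        hence "\<omega> \<in> Ebad l D" unfolding Ebad_def using om by simp
        moreover have lDQ: "(l, D) \<in> ?Q" using l D lI lz by simp
        have "\<omega> \<notin> Ebad (fst (l, D)) (snd (l, D))" using bspec[OF elim(1) lDQ] .
        ultimately show False by simp
      qed
    qed
  qed
qed

definition Rset :: "real \<Rightarrow> 'w set" where
  "Rset l = {\<omega>\<in>\<Omega>. \<exists>r\<in>\<rat>. 0 \<le> r \<and> ennreal r < \<zeta> \<omega> \<and> X r \<omega> < l}"

lemma Rset_sets: assumes "x \<in> I" shows "Rset l \<in> sets (P x)"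
proof -
  have "Rset l = (\<Union>r\<in>{r\<in>\<rat>. 0 \<le> r}. {\<omega>\<in>\<Omega>. ennreal r < \<zeta> \<omega> \<and> X r \<omega> < l})"
    unfolding Rset_def by auto
  also have "\<dots> \<in> sets (P x)"
    by (rule sets.countable_UN'') (auto intro: countable_subset[OF _ countable_rat] ev_less_sets[OF assms])
  finally show ?thesis .
qed

lemma R_T: "\<omega> \<in> Rset l \<Longrightarrow> Tminus X \<zeta> l \<omega> < \<zeta> \<omega>"
proof -
  assume "\<omega> \<in> Rset l"
  then obtain r where r: "0 \<le> r" "ennreal r < \<zeta> \<omega>" "X r \<omega> < l" unfolding Rset_def by blast
  hence "r \<in> Sset l \<omega>" unfolding Sset_def by simp
  hence "Tminus X \<zeta> l \<omega> \<le> ennreal r" by (rule T_le)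
  thus ?thesis using r(2) by simp
qed

lemma T_R: assumes "\<omega> \<in> \<Omega>" "l < l2" "Tminus X \<zeta> l \<omega> < \<zeta> \<omega>" shows "\<omega> \<in> Rset l2"
proof -
  obtain s where "s \<in> Sset l \<omega>" using T_less_ex[OF assms(3)] by blast
  hence s: "0 \<le> s" "ennreal s < \<zeta> \<omega>" "X s \<omega> < l2" using assms(2) unfolding Sset_def by auto
  obtain r where r: "r \<in> \<rat>" "s < r" "ennreal r < \<zeta> \<omega>" "X r \<omega> < l2"
    using rat_near[OF assms(1) s(1,2,3), of "s + 1"] by auto
  have "\<exists>r\<in>\<rat>. 0 \<le> r \<and> ennreal r < \<zeta> \<omega> \<and> X r \<omega> < l2"
    using r s(1) by (intro bexI[of _ r]) auto
  thus ?thesis unfolding Rset_def using assms(1) by simp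
qed

lemma cc_pos: "0 < cc x l" unfolding cc_def by simp

lemma R_le_c: assumes "x \<in> I" "l \<in> I" "l \<le> x"
  shows "measure (P x) (Rset l) \<le> cc x l"
proof -
  interpret ps: prob_space "P x" using Pprop[OF assms(1)] by simp
  have "emeasure (P x) (Rset l) = (\<integral>\<^sup>+\<omega>. indicator (Rset l) \<omega> \<partial>P x)"
    using Rset_sets[OF assms(1)] by simp
  also have "\<dots> \<le> (\<integral>\<^sup>+\<omega>. indicator {\<omega>. Tminus X \<zeta> l \<omega> < \<zeta> \<omega>} \<omega> \<partial>P x)"
    by (intro nn_integral_mono) (auto simp: indicator_def dest: R_T)
  also have "\<dots> = ennreal (cc x l)" using lap0[OF assms] .
  finally show ?thesis using ps.emeasure_eq_measure less_imp_le[OF cc_pos[of x l]] by (simp add: ennreal_le_iff)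
qed

lemma c_le_R: assumes "x \<in> I" "l \<in> I" "l \<le> x" "l < l2"
  shows "cc x l \<le> measure (P x) (Rset l2)"
proof -
  interpret ps: prob_space "P x" using Pprop[OF assms(1)] by simp
  have sp: "space (P x) = \<Omega>" using Pprop[OF assms(1)] by simp
  have "ennreal (cc x l) = (\<integral>\<^sup>+\<omega>. indicator {\<omega>. Tminus X \<zeta> l \<omega> < \<zeta> \<omega>} \<omega> \<partial>P x)"
    using lap0[OF assms(1-3)] by simp
  also have "\<dots> \<le> (\<integral>\<^sup>+\<omega>. indicator (Rset l2) \<omega> \<partial>P x)"
    by (intro nn_integral_mono) (auto simp: indicator_def sp dest: T_R[OF _ assms(4)])
  also have "\<dots> = emeasure (P x) (Rset l2)" using Rset_sets[OF assms(1)] by simp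
  finally show ?thesis using ps.emeasure_eq_measure by (simp add: ennreal_le_iff)
qed

lemma cc_mono: assumes "x \<in> I" shows "mono_on {l\<in>I. l \<le> x} (cc x)"
proof (rule mono_onI)
  fix a b assume a: "a \<in> {l\<in>I. l \<le> x}" and b: "b \<in> {l\<in>I. l \<le> x}" and ab: "a \<le> b"
  show "cc x a \<le> cc x b"
  proof (cases "a = b")
    case False
    hence "a < b" using ab by simp
    thus ?thesis using c_le_R[OF assms _ _ \<open>a < b\<close>] R_le_c[OF assms] a b by force
  qed simp
qed

lemma stop_const: assumes "0 \<le> t" shows "is_stopping_time \<Omega> F (\<lambda>_. ennreal t)"
  unfolding is_stopping_time_def
proof (intro allI impI)
  fix s :: real assume s: "0 \<le> s"
  interpret sigma_algebra \<Omega> "F s" using sa[OF s] .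
  show "{\<omega> \<in> \<Omega>. ennreal t \<le> ennreal s} \<in> F s"
    by (cases "t \<le> s") (auto simp: ennreal_le_iff s)
qed

lemma F_at_const: assumes "0 \<le> t" "A \<in> F t" shows "A \<in> F_at \<Omega> F (\<lambda>_. ennreal t)"
  unfolding F_at_def
proof (intro CollectI conjI allI impI)
  show "A \<in> F_infty \<Omega> F" using F_infty_sub[OF assms(1)] assms(2) by auto
  have AO: "A \<subseteq> \<Omega>"
  proof -
    interpret sigma_algebra \<Omega> "F t" using sa[OF assms(1)] .
    show ?thesis using assms(2) sets_into_space by auto
  qed
  fix s :: real assume s: "0 \<le> s"
  interpret sigma_algebra \<Omega> "F s" using sa[OF s] .
  show "A \<inter> {\<omega> \<in> \<Omega>. ennreal t \<le> ennreal s} \<in> F s"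
  proof (cases "t \<le> s")
    case True
    hence "A \<inter> {\<omega> \<in> \<Omega>. ennreal t \<le> ennreal s} = A" using AO s by (auto simp: ennreal_le_iff)
    thus ?thesis using Fmono[OF assms(1) True] assms(2) by auto
  next
    case False
    hence "A \<inter> {\<omega> \<in> \<Omega>. ennreal t \<le> ennreal s} = {}" using s by (auto simp: ennreal_le_iff)
    thus ?thesis by simp
  qed
qed

lemma g_meas_P: assumes "x \<in> I" "g \<in> borel_measurable (sigma \<Omega> (F_at \<Omega> F S))"
  shows "g \<in> borel_measurable (P x)"
proof (rule measurable_from_subalg[OF _ assms(2)])
  have sub: "F_at \<Omega> F S \<subseteq> sets (P x)" using Pprop(3)[OF assms(1)] unfolding F_at_def by auto
  have sub2: "F_at \<Omega> F S \<subseteq> Pow \<Omega>" using sub sets.space_closed[of "P x"] Pprop(2)[OF assms(1)] by auto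
  show "subalgebra (P x) (sigma \<Omega> (F_at \<Omega> F S))"
    unfolding subalgebra_def
    using sets.sigma_sets_subset[of "F_at \<Omega> F S" "P x"] sub sub2 Pprop(2)[OF assms(1)]
    by (simp add: sets_measure_of space_measure_of_conv)
qed

lemma H_meas: "(indicator {p :: real \<Rightarrow> ereal. (\<exists>r\<in>\<rat>. 0 \<le> r \<and> p r < ereal l) \<and>
     (\<forall>r\<in>\<rat>. 0 \<le> r \<and> r \<le> a \<longrightarrow> ereal m \<le> p r)} :: (real \<Rightarrow> ereal) \<Rightarrow> ennreal)
   \<in> borel_measurable path_space"
proof -
  let ?H = "{p :: real \<Rightarrow> ereal. (\<exists>r\<in>\<rat>. 0 \<le> r \<and> p r < ereal l) \<and>
     (\<forall>r\<in>\<rat>. 0 \<le> r \<and> r \<le> a \<longrightarrow> ereal m \<le> p r)}"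
  let ?S = "space path_space"
  have comp: "{p\<in>?S. p r < ereal c} \<in> sets path_space" if "0 \<le> r" for r c
  proof -
    have "(\<lambda>p. p r) \<in> measurable path_space (borel :: ereal measure)"
      unfolding path_space_def using that by (intro measurable_component_singleton) simp
    hence "(\<lambda>p. p r) -` {..<ereal c} \<inter> ?S \<in> sets path_space"
      by (rule measurable_sets) simp
    moreover have "(\<lambda>p. p r) -` {..<ereal c} \<inter> ?S = {p\<in>?S. p r < ereal c}" by auto
    ultimately show ?thesis by simp
  qed
  have eq: "{p\<in>?S. p \<in> ?H} = (\<Union>r\<in>{r\<in>\<rat>. 0 \<le> r}. {p\<in>?S. p r < ereal l}) \<inter>
      (?S - (\<Union>r\<in>{r\<in>\<rat>. 0 \<le> r \<and> r \<le> a}. {p\<in>?S. p r < ereal m}))"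
    by (auto simp: not_less)
  have "{p\<in>?S. p \<in> ?H} \<in> sets path_space"
    unfolding eq
    by (intro sets.Int sets.Diff sets.top sets.countable_UN'' comp)
       (auto intro: countable_subset[OF _ countable_rat])
  thus ?thesis by (rule borel_measurable_indicator')
qed

end

context thm_ctx begin

lemma strong_markov: assumes "is_stopping_time \<Omega> F S" "H \<in> borel_measurable path_space" "x \<in> I"
  shows "\<exists>g \<in> borel_measurable (sigma \<Omega> (F_at \<Omega> F S)).
            (AE \<omega> in P x. S \<omega> < \<zeta> \<omega> \<longrightarrow>
               g \<omega> = (\<integral>\<^sup>+\<omega>'. (H (Xpath X \<zeta> \<omega>') :: ennreal) \<partial>P (X (enn2real (S \<omega>)) \<omega>))) \<and>
            (\<forall>A\<in>F_at \<Omega> F S.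
               (\<integral>\<^sup>+\<omega>. indicator (A \<inter> {\<omega>. S \<omega> < \<zeta> \<omega>}) \<omega> * H (Xshift X \<zeta> S \<omega>) \<partial>P x)
             = (\<integral>\<^sup>+\<omega>. indicator (A \<inter> {\<omega>. S \<omega> < \<zeta> \<omega>}) \<omega> * g \<omega> \<partial>P x))"
proof -
  have "\<forall>S. is_stopping_time \<Omega> F S \<longrightarrow>
        (\<forall>H\<in>borel_measurable path_space. \<forall>x\<in>I.
          \<exists>g \<in> borel_measurable (sigma \<Omega> (F_at \<Omega> F S)).
            (AE \<omega> in P x. S \<omega> < \<zeta> \<omega> \<longrightarrow>
               g \<omega> = (\<integral>\<^sup>+\<omega>'. (H (Xpath X \<zeta> \<omega>') :: ennreal) \<partial>P (X (enn2real (S \<omega>)) \<omega>))) \<and>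
            (\<forall>A\<in>F_at \<Omega> F S.
               (\<integral>\<^sup>+\<omega>. indicator (A \<inter> {\<omega>. S \<omega> < \<zeta> \<omega>}) \<omega> * H (Xshift X \<zeta> S \<omega>) \<partial>P x)
             = (\<integral>\<^sup>+\<omega>. indicator (A \<inter> {\<omega>. S \<omega> < \<zeta> \<omega>}) \<omega> * g \<omega> \<partial>P x)))"
    using setting unfolding standing_setting_def by (elim conjE) assumption
  thus ?thesis using assms by blast
qed

lemma upper_null: assumes x: "x \<in> I" and t: "t \<in> \<rat>" "0 \<le> t" and d: "0 < \<delta>"
  shows "emeasure (P x) {\<omega>\<in>\<Omega>. ennreal t < \<zeta> \<omega> \<and> yy x t + \<delta> < X t \<omega>} = 0"
proof (rule ccontr)
  interpret ps: prob_space "P x" using Pprop[OF x] by simp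
  have sp: "space (P x) = \<Omega>" using Pprop[OF x] by simp
  have Om: "\<Omega> \<in> sets (P x)" using sets.top[of "P x"] sp by simp
  define A where "A = {\<omega>\<in>\<Omega>. ennreal t < \<zeta> \<omega> \<and> yy x t + \<delta> < X t \<omega>}"
  assume "emeasure (P x) {\<omega>\<in>\<Omega>. ennreal t < \<zeta> \<omega> \<and> yy x t + \<delta> < X t \<omega>} \<noteq> 0"
  hence Ane: "emeasure (P x) A \<noteq> 0" unfolding A_def .
  have AF: "A \<in> F t" unfolding A_def using adapted[OF t(2), of "{yy x t + \<delta><..}"] by simp
  have Asets: "A \<in> sets (P x)" using Fsets[OF x t(2) AF] .
  define y0 where "y0 = yy x t"
  have y0I: "y0 \<in> I" and y0V: "V y0 = V x - t" using yy[OF x t(2)] y0_def by auto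
  have y0x: "y0 \<le> x" using yy_le[OF x t(2)] y0_def by simp
  define z0 where "z0 = y0 + \<delta>"
  have z0I: "z0 \<in> I" using I_up[OF y0I] d z0_def by simp
  define \<kappa> where "\<kappa> = V z0 - V y0"
  have \<kappa>: "0 < \<kappa>" using V_less[OF y0I z0I] d z0_def \<kappa>_def by simp
  define \<alpha> where "\<alpha> = yy x (t + 1)"
  have \<alpha>I: "\<alpha> \<in> I" using yy[OF x] t(2) \<alpha>_def by simp
  have \<alpha>y0: "\<alpha> < y0" using yy_strict[OF x t(2), of "t+1"] \<alpha>_def y0_def by simp
  define J where "J = {l\<in>I. l \<le> x}"
  have cnt: "countable {a\<in>J. \<not> continuous (at a within J) (cc x)}"
    using mono_on_ctble_discont[OF cc_mono[OF x]] J_def by simp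
  have "\<not> {\<alpha><..<y0} \<subseteq> {a\<in>J. \<not> continuous (at a within J) (cc x)}"
    using cnt countable_subset uncountable_open_interval \<alpha>y0 by blast
  then obtain l' where l'1: "l' \<in> {\<alpha><..<y0}"
    and l'2: "l' \<notin> {a\<in>J. \<not> continuous (at a within J) (cc x)}" by blast
  have l'I: "l' \<in> I" using I_seg[OF \<alpha>I y0I] l'1 by auto
  have l'x: "l' \<le> x" "l' < y0" "\<alpha> < l'" using l'1 y0x by auto
  have l'J: "l' \<in> J" unfolding J_def using l'I l'x by simp
  have cont: "continuous (at l' within J) (cc x)" using l'2 l'J by simp
  define dd where "dd = V x - V l'"
  have Vl': "V l' < V y0" using V_less[OF l'I y0I l'x(2)] .
  have dd_t: "t < dd" using Vl' y0V dd_def by simp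
  define a where "a = dd - t + \<kappa>/2"
  have a0: "0 < a" using dd_t \<kappa> a_def by simp
  obtain m where mI: "m \<in> I" and mV: "V m = V l' + \<kappa>/2"
  proof -
    have "0 \<le> V z0 - V l' - \<kappa>/2" using Vl' \<kappa> \<kappa>_def by simp
    then obtain u where "u \<in> I" "V u = V z0 - (V z0 - V l' - \<kappa>/2)" using V_surj[OF z0I] by blast
    thus ?thesis using that by simp
  qed
  have l'm: "l' < m" using V_less_iff[OF l'I mI] mV \<kappa> by simp
  define Hs where "Hs = {p :: real \<Rightarrow> ereal. (\<exists>r\<in>\<rat>. 0 \<le> r \<and> p r < ereal l') \<and>
     (\<forall>r\<in>\<rat>. 0 \<le> r \<and> r \<le> a \<longrightarrow> ereal m \<le> p r)}"
  define H :: "(real \<Rightarrow> ereal) \<Rightarrow> ennreal" where "H = indicator Hs"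
  have Hm: "H \<in> borel_measurable path_space" unfolding H_def Hs_def by (rule H_meas)
  have Hpos: "0 < (\<integral>\<^sup>+\<omega>. H (Xpath X \<zeta> \<omega>) \<partial>P z)" if zI: "z \<in> I" and zz: "z0 < z" for z
  proof -
    have "AE \<omega> in P z. indicator (Rset l') \<omega> \<le> H (Xpath X \<zeta> \<omega>)"
      using lower_AE[OF zI] AE_space
    proof eventually_elim
      case (elim \<omega>)
      show ?case
      proof (cases "\<omega> \<in> Rset l'")
        case True
        then obtain r where r: "r \<in> \<rat>" "0 \<le> r" "ennreal r < \<zeta> \<omega>" "X r \<omega> < l'"
          unfolding Rset_def by blast
        have c1: "\<exists>r\<in>\<rat>. 0 \<le> r \<and> Xpath X \<zeta> \<omega> r < ereal l'"
          using r by (intro bexI[of _ r]) (auto simp: Xpath_def)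
        have c2: "ereal m \<le> Xpath X \<zeta> \<omega> r" if rr: "r \<in> \<rat>" "0 \<le> r" "r \<le> a" for r
        proof (cases "ennreal r < \<zeta> \<omega>")
          case True
          have "V (yy z a) = V z - a" using yy[OF zI] a0 by simp
          moreover have "V z0 < V z" using V_less[OF z0I zI zz] .
          moreover have "V z0 - a = V l' + \<kappa>/2"
          proof -
            have "\<kappa>/2 + \<kappa>/2 = V z0 - V y0" unfolding \<kappa>_def by simp
            thus ?thesis unfolding a_def dd_def using y0V by linarith
          qed
          ultimately have "V m < V (yy z a)" using mV by simp
          hence "m < yy z a" using V_less_iff[OF mI yy(1)[OF zI]] a0 by simp
          also have "yy z a \<le> yy z r" using yy_anti[OF zI rr(2,3)] .
          also have "yy z r \<le> X r \<omega>" using elim(1) rr(2) True by simp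
          finally show ?thesis using True rr(2) by (simp add: Xpath_def)
        next
          case False
          thus ?thesis using rr(2) by (simp add: Xpath_def)
        qed
        have "Xpath X \<zeta> \<omega> \<in> Hs" unfolding Hs_def using c1 c2 by blast
        thus ?thesis unfolding H_def by (simp add: indicator_def)
      qed simp
    qed
    hence "(\<integral>\<^sup>+\<omega>. indicator (Rset l') \<omega> \<partial>P z) \<le> (\<integral>\<^sup>+\<omega>. H (Xpath X \<zeta> \<omega>) \<partial>P z)"
      by (rule nn_integral_mono_AE)
    moreover have "(\<integral>\<^sup>+\<omega>. indicator (Rset l') \<omega> \<partial>P z) = emeasure (P z) (Rset l')"
      using Rset_sets[OF zI] by simp
    moreover have "emeasure (P z) (Rset l') = ennreal (measure (P z) (Rset l'))"
    proof -
      interpret pz: prob_space "P z" using Pprop(1)[OF zI] .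
      show ?thesis using pz.emeasure_eq_measure .
    qed
    moreover have "cc z \<alpha> \<le> measure (P z) (Rset l')"
      using c_le_R[OF zI \<alpha>I _ l'x(3)] \<alpha>y0 zz z0_def d by simp
    moreover have "0 < cc z \<alpha>" by (rule cc_pos)
    ultimately show ?thesis by (metis ennreal_less_zero_iff order_less_le_trans ennreal_leI)
  qed
  define S where "S = (\<lambda>_::'w. ennreal t)"
  have Sst: "is_stopping_time \<Omega> F S" unfolding S_def by (rule stop_const[OF t(2)])
  have AFat: "A \<in> F_at \<Omega> F S" unfolding S_def by (rule F_at_const[OF t(2) AF])
  obtain g where g1: "g \<in> borel_measurable (sigma \<Omega> (F_at \<Omega> F S))"
    and g2: "AE \<omega> in P x. S \<omega> < \<zeta> \<omega> \<longrightarrow>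
               g \<omega> = (\<integral>\<^sup>+\<omega>'. H (Xpath X \<zeta> \<omega>') \<partial>P (X (enn2real (S \<omega>)) \<omega>))"
    and g3: "\<forall>A\<in>F_at \<Omega> F S.
               (\<integral>\<^sup>+\<omega>. indicator (A \<inter> {\<omega>. S \<omega> < \<zeta> \<omega>}) \<omega> * H (Xshift X \<zeta> S \<omega>) \<partial>P x)
             = (\<integral>\<^sup>+\<omega>. indicator (A \<inter> {\<omega>. S \<omega> < \<zeta> \<omega>}) \<omega> * g \<omega> \<partial>P x)"
    using strong_markov[OF Sst Hm x] by blast
  have gP: "g \<in> borel_measurable (P x)" using g_meas_P[OF x g1] .
  have AS: "A \<inter> {\<omega>. S \<omega> < \<zeta> \<omega>} = A" unfolding A_def S_def by auto
  have ES: "\<And>\<omega>. enn2real (S \<omega>) = t" unfolding S_def using t(2) by simp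
  have gpos: "0 < (\<integral>\<^sup>+\<omega>. indicator A \<omega> * g \<omega> \<partial>P x)"
  proof (rule ccontr)
    assume "\<not> 0 < (\<integral>\<^sup>+\<omega>. indicator A \<omega> * g \<omega> \<partial>P x)"
    hence z: "(\<integral>\<^sup>+\<omega>. indicator A \<omega> * g \<omega> \<partial>P x) = 0" by (simp add: not_gr_zero)
    have mf: "(\<lambda>\<omega>. indicator A \<omega> * g \<omega>) \<in> borel_measurable (P x)"
      by (intro borel_measurable_times_ennreal borel_measurable_indicator gP Asets)
    have "AE \<omega> in P x. indicator A \<omega> * g \<omega> = 0" using z nn_integral_0_iff_AE[OF mf] by simp
    hence "AE \<omega> in P x. \<omega> \<notin> A"
      using g2 AE_space
    proof eventually_elim
      case (elim \<omega>)
      show ?case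
      proof
        assume wA: "\<omega> \<in> A"
        hence om: "\<omega> \<in> \<Omega>" and al: "ennreal t < \<zeta> \<omega>" and Xz: "z0 < X t \<omega>"
          unfolding A_def y0_def z0_def by auto
        have XI: "X t \<omega> \<in> I" using paths(1)[OF om t(2) al] .
        have "g \<omega> = (\<integral>\<^sup>+\<omega>'. H (Xpath X \<zeta> \<omega>') \<partial>P (X t \<omega>))"
          using elim(2) ES al S_def by simp
        hence "0 < g \<omega>" using Hpos[OF XI Xz] by simp
        thus False using elim(1) wA by simp
      qed
    qed
    note aeA = this
    have Asub: "A \<subseteq> space (P x)" using sets.sets_into_space[OF Asets] .
    have eqA: "{\<omega> \<in> space (P x). \<not> \<omega> \<notin> A} = A" using Asub by blast
    have "emeasure (P x) A = 0" using AE_iff_measurable[OF Asets eqA] aeA by simp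
    thus False using Ane by simp
  qed
  have eqint: "(\<integral>\<^sup>+\<omega>. indicator A \<omega> * H (Xshift X \<zeta> S \<omega>) \<partial>P x) = (\<integral>\<^sup>+\<omega>. indicator A \<omega> * g \<omega> \<partial>P x)"
    using g3 AFat AS by metis
  define M where "M = {\<omega>\<in>A. (\<exists>r\<in>\<rat>. 0 \<le> r \<and> ennreal (t+r) < \<zeta> \<omega> \<and> X (t+r) \<omega> < l') \<and>
      (\<forall>r\<in>\<rat>. 0 \<le> r \<and> r \<le> a \<and> ennreal (t+r) < \<zeta> \<omega> \<longrightarrow> m \<le> X (t+r) \<omega>)}"
  have indM: "indicator A \<omega> * H (Xshift X \<zeta> S \<omega>) = indicator M \<omega>" for \<omega>
  proof (cases "\<omega> \<in> A")
    case True
    have xs: "\<And>r. 0 \<le> r \<Longrightarrow> Xshift X \<zeta> S \<omega> r = (if ennreal (t + r) < \<zeta> \<omega> then ereal (X (t+r) \<omega>) else \<infinity>)"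
      unfolding Xshift_def S_def using t(2) by simp
    have "Xshift X \<zeta> S \<omega> \<in> Hs \<longleftrightarrow> \<omega> \<in> M"
    proof
      assume h: "Xshift X \<zeta> S \<omega> \<in> Hs"
      then obtain r where r: "r \<in> \<rat>" "0 \<le> r" "Xshift X \<zeta> S \<omega> r < ereal l'" unfolding Hs_def by blast
      have e1: "\<exists>r\<in>\<rat>. 0 \<le> r \<and> ennreal (t+r) < \<zeta> \<omega> \<and> X (t+r) \<omega> < l'"
        using r xs[OF r(2)] by (intro bexI[of _ r]) (auto split: if_splits)
      have e2: "m \<le> X (t+r) \<omega>" if "r \<in> \<rat>" "0 \<le> r" "r \<le> a" "ennreal (t+r) < \<zeta> \<omega>" for r
        using h that xs[OF that(2)] unfolding Hs_def by force
      show "\<omega> \<in> M" unfolding M_def using True e1 e2 by blast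
    next
      assume h: "\<omega> \<in> M"
      then obtain r where r: "r \<in> \<rat>" "0 \<le> r" "ennreal (t+r) < \<zeta> \<omega>" "X (t+r) \<omega> < l'"
        unfolding M_def by blast
      have e1: "\<exists>r\<in>\<rat>. 0 \<le> r \<and> Xshift X \<zeta> S \<omega> r < ereal l'"
        using r xs[OF r(2)] by (intro bexI[of _ r]) auto
      have e2: "ereal m \<le> Xshift X \<zeta> S \<omega> r" if "r \<in> \<rat>" "0 \<le> r" "r \<le> a" for r
        using h that xs[OF that(2)] unfolding M_def by auto
      show "Xshift X \<zeta> S \<omega> \<in> Hs" unfolding Hs_def using e1 e2 by blast
    qed
    thus ?thesis using True unfolding H_def by (simp add: indicator_def M_def)
  next
    case False
    thus ?thesis by (simp add: M_def)
  qed
  have Msets: "M \<in> sets (P x)"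
  proof -
    have "M = A \<inter> (\<Union>r\<in>{r\<in>\<rat>. 0 \<le> r}. {\<omega>\<in>\<Omega>. ennreal (t+r) < \<zeta> \<omega> \<and> X (t+r) \<omega> < l'}) \<inter>
      (\<Omega> - (\<Union>r\<in>{r\<in>\<rat>. 0 \<le> r \<and> r \<le> a}. {\<omega>\<in>\<Omega>. ennreal (t+r) < \<zeta> \<omega> \<and> X (t+r) \<omega> < m}))"
      unfolding M_def A_def by (auto simp: not_less)
    also have "\<dots> \<in> sets (P x)"
      using t(2)
      by (intro sets.Int sets.Diff Asets Om sets.countable_UN'' ev_less_sets[OF x])
         (auto intro: countable_subset[OF _ countable_rat])
    finally show ?thesis .
  qed
  have "emeasure (P x) M = (\<integral>\<^sup>+\<omega>. indicator M \<omega> \<partial>P x)" using Msets by simp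
  also have "\<dots> = (\<integral>\<^sup>+\<omega>. indicator A \<omega> * H (Xshift X \<zeta> S \<omega>) \<partial>P x)" using indM by simp
  also have "\<dots> = (\<integral>\<^sup>+\<omega>. indicator A \<omega> * g \<omega> \<partial>P x)" using eqint .
  finally have "0 < emeasure (P x) M" using gpos by simp
  hence Mpos: "0 < measure (P x) M" using ps.emeasure_eq_measure by simp
  define \<rho> where "\<rho> = 1 - exp (-(\<kappa>/2))"
  have \<rho>: "0 < \<rho>" using \<kappa> \<rho>_def by simp
  define \<epsilon> where "\<epsilon> = \<rho> * measure (P x) M / 2"
  have \<epsilon>: "0 < \<epsilon>" unfolding \<epsilon>_def using mult_pos_pos[OF \<rho> Mpos] by simp
  obtain dl where dl: "0 < dl" "\<forall>l\<in>J. dist l l' < dl \<longrightarrow> dist (cc x l) (cc x l') < \<epsilon>"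
    using cont \<epsilon> unfolding continuous_within_eps_delta by blast
  define l'' where "l'' = min (l' + dl/2) ((l' + y0)/2)"
  have h1: "(l' + y0)/2 < y0" "l' < (l'+y0)/2" using l'x(2) by (simp_all add: field_simps)
  have h2: "l' < l' + dl/2" using dl(1) by simp
  have l''1: "l' < l''" "l'' < y0" unfolding l''_def using h1 h2 by (auto simp: min_def)
  have l''I: "l'' \<in> I" using I_seg[OF l'I y0I] l''1 by auto
  have l''x: "l'' \<le> x" using l''1 y0x by simp
  have "l'' - l' \<le> dl/2" unfolding l''_def by (simp add: min_def)
  hence "dist l'' l' < dl" using l''1(1) dl(1) by (simp add: dist_real_def)
  hence "dist (cc x l'') (cc x l') < \<epsilon>" using dl(2) l''I l''x J_def by simp
  hence cgap: "cc x l'' - cc x l' < \<epsilon>" by (simp add: dist_real_def)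
  have lapl: "(\<integral>\<^sup>+\<omega>. indicator {\<omega>. Tminus X \<zeta> l' \<omega> < \<zeta> \<omega>} \<omega>
                   * ennreal (exp (- 1 * enn2real (Tminus X \<zeta> l' \<omega>))) \<partial>P x)
         = ennreal (cc x l' * exp (- dd))"
    using lap[OF x l'I l'x(1), of 1] dd_def by simp
  have MR: "M \<subseteq> Rset l''"
  proof
    fix \<omega> assume "\<omega> \<in> M"
    then obtain r where r: "r \<in> \<rat>" "0 \<le> r" "ennreal (t+r) < \<zeta> \<omega>" "X (t+r) \<omega> < l'" and om: "\<omega> \<in> \<Omega>"
      unfolding M_def A_def by blast
    have "\<exists>r'\<in>\<rat>. 0 \<le> r' \<and> ennreal r' < \<zeta> \<omega> \<and> X r' \<omega> < l''"
      using r t l''1(1) by (intro bexI[of _ "t + r"]) auto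
    thus "\<omega> \<in> Rset l''" unfolding Rset_def using om by simp
  qed
  have R''sets: "Rset l'' \<in> sets (P x)" using Rset_sets[OF x] .
  have ub: "AE \<omega> in P x. indicator {\<omega>. Tminus X \<zeta> l' \<omega> < \<zeta> \<omega>} \<omega>
                   * ennreal (exp (- 1 * enn2real (Tminus X \<zeta> l' \<omega>))) \<le>
      ennreal (exp (-dd)) * indicator (Rset l'' - M) \<omega> + ennreal (exp (-(dd + \<kappa>/2))) * indicator M \<omega>"
    using lower_AE[OF x] AE_space
  proof eventually_elim
    case (elim \<omega>)
    have om: "\<omega> \<in> \<Omega>" using elim(2) sp by simp
    show ?case
    proof (cases "Tminus X \<zeta> l' \<omega> < \<zeta> \<omega>")
      case False thus ?thesis by simp
    next
      case True
      note TL = True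
      have Tfin: "Tminus X \<zeta> l' \<omega> < \<infinity>" using order.strict_trans2[OF TL top_greatest] by simp
      have Tdd: "ennreal dd \<le> Tminus X \<zeta> l' \<omega>"
      proof (rule T_ge)
        fix s assume "s \<in> Sset l' \<omega>"
        hence s: "0 \<le> s" "ennreal s < \<zeta> \<omega>" "X s \<omega> \<le> l'" unfolding Sset_def by auto
        have "yy x s \<le> l'" using elim(1) s by force
        hence "V (yy x s) \<le> V l'" using V_le_iff[OF yy(1)[OF x s(1)] l'I] by simp
        thus "dd \<le> s" using yy(2)[OF x s(1)] dd_def by simp
      qed
      have dd0: "0 \<le> dd" using dd_t t(2) by simp
      have eT: "dd \<le> enn2real (Tminus X \<zeta> l' \<omega>)" using enn2real_ge_of[OF Tdd Tfin dd0] .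
      have inR: "\<omega> \<in> Rset l''" using T_R[OF om l''1(1) TL] .
      show ?thesis
      proof (cases "\<omega> \<in> M")
        case False
        have "exp (- 1 * enn2real (Tminus X \<zeta> l' \<omega>)) \<le> exp (-dd)" using eT by simp
        thus ?thesis using TL False inR by (simp add: ennreal_leI)
      next
        case True
        have Tta: "ennreal (t + a) \<le> Tminus X \<zeta> l' \<omega>"
        proof (rule T_ge)
          fix s assume "s \<in> Sset l' \<omega>"
          hence s: "0 \<le> s" "ennreal s < \<zeta> \<omega>" "X s \<omega> \<le> l'" unfolding Sset_def by auto
          show "t + a \<le> s"
          proof (rule ccontr)
            assume "\<not> t + a \<le> s"
            hence sta: "s < t + a" by simp
            show False
            proof (cases "s \<le> t")
              case True
              have "yy x t \<le> yy x s" using yy_anti[OF x s(1) True] .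
              moreover have "yy x s \<le> X s \<omega>" using elim(1) s by force
              ultimately show False using s(3) l'x(2) y0_def by simp
            next
              case False
              have Xm: "X s \<omega> < m" using s(3) l'm by simp
              obtain r' where r': "r' \<in> \<rat>" "s < r'" "r' < t + a" "ennreal r' < \<zeta> \<omega>" "X r' \<omega> < m"
                using rat_near[OF om s(1,2) Xm sta] by blast
              have rq: "r' - t \<in> \<rat>" using r'(1) t(1) by (simp add: Rats_diff)
              have rr: "0 \<le> r' - t" "r' - t \<le> a" using r' False by auto
              have "m \<le> X (t + (r' - t)) \<omega>"
                using \<open>\<omega> \<in> M\<close> rq rr r'(4) unfolding M_def by auto
              thus False using r'(5) by simp
            qed
          qed
        qed
        have ta0: "0 \<le> t + a" using t a0 by simp
        have "t + a \<le> enn2real (Tminus X \<zeta> l' \<omega>)" using enn2real_ge_of[OF Tta Tfin ta0] .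
        moreover have "t + a = dd + \<kappa>/2" using a_def by simp
        ultimately have "exp (- 1 * enn2real (Tminus X \<zeta> l' \<omega>)) \<le> exp (-(dd + \<kappa>/2))" by simp
        thus ?thesis using True TL by (simp add: ennreal_leI)
      qed
    qed
  qed
  have RMsets: "Rset l'' - M \<in> sets (P x)" using R''sets Msets by auto
  have m1: "(\<lambda>\<omega>. ennreal (exp (-dd)) * indicator (Rset l'' - M) \<omega>) \<in> borel_measurable (P x)"
    by (intro borel_measurable_times_ennreal borel_measurable_const borel_measurable_indicator RMsets)
  have m2: "(\<lambda>\<omega>. ennreal (exp (-(dd + \<kappa>/2))) * indicator M \<omega>) \<in> borel_measurable (P x)"
    by (intro borel_measurable_times_ennreal borel_measurable_const borel_measurable_indicator Msets)
  have "ennreal (cc x l' * exp (- dd)) \<le> (\<integral>\<^sup>+\<omega>. ennreal (exp (-dd)) * indicator (Rset l'' - M) \<omega> +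
         ennreal (exp (-(dd + \<kappa>/2))) * indicator M \<omega> \<partial>P x)"
    using nn_integral_mono_AE[OF ub] lapl by simp
  also have "\<dots> = ennreal (exp (-dd)) * emeasure (P x) (Rset l'' - M) + ennreal (exp (-(dd + \<kappa>/2))) * emeasure (P x) M"
    using nn_integral_add[OF m1 m2] nn_integral_cmult_indicator[OF RMsets] nn_integral_cmult_indicator[OF Msets] by simp
  also have "\<dots> = ennreal (exp (-dd) * measure (P x) (Rset l'' - M) + exp (-(dd + \<kappa>/2)) * measure (P x) M)"
    using ps.emeasure_eq_measure by (simp add: ennreal_mult)
  finally have calc: "ennreal (cc x l' * exp (- dd)) \<le> ennreal (exp (-dd) * measure (P x) (Rset l'' - M) + exp (-(dd + \<kappa>/2)) * measure (P x) M)" .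
  have nnR: "0 \<le> exp (-dd) * measure (P x) (Rset l'' - M) + exp (-(dd + \<kappa>/2)) * measure (P x) M" by simp
  have ineq: "cc x l' * exp (- dd) \<le> exp (-dd) * measure (P x) (Rset l'' - M) + exp (-(dd + \<kappa>/2)) * measure (P x) M"
    using calc ennreal_le_iff[OF nnR] by blast
  have diff: "measure (P x) (Rset l'' - M) = measure (P x) (Rset l'') - measure (P x) M"
    using ps.finite_measure_Diff[OF R''sets Msets MR] .
  have ex: "exp (-(dd + \<kappa>/2)) = exp (-dd) * exp (-(\<kappa>/2))"
    by (simp add: exp_add[symmetric])
  have "exp (-dd) * cc x l' \<le> exp (-dd) * (measure (P x) (Rset l'') - measure (P x) M + exp (-(\<kappa>/2)) * measure (P x) M)"
    using ineq diff ex by (simp add: algebra_simps)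
  hence "cc x l' \<le> measure (P x) (Rset l'') - measure (P x) M + exp (-(\<kappa>/2)) * measure (P x) M"
    by (rule mult_left_le_imp_le) simp
  hence c1: "cc x l' \<le> measure (P x) (Rset l'') - \<rho> * measure (P x) M"
    unfolding \<rho>_def by (simp add: algebra_simps)
  have c2: "measure (P x) (Rset l'') \<le> cc x l''" using R_le_c[OF x l''I l''x] .
  have "\<rho> * measure (P x) M \<le> cc x l'' - cc x l'" using c1 c2 by simp
  hence "\<rho> * measure (P x) M < \<epsilon>" using cgap by simp
  thus False using \<epsilon>_def \<rho> Mpos by simp
qed


lemma path_AE: assumes x: "x \<in> I"
  shows "AE \<omega> in P x. \<forall>t\<ge>0. ennreal t < \<zeta> \<omega> \<longrightarrow> X t \<omega> = yy x t"
proof -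
  have sp: "space (P x) = \<Omega>" using Pprop[OF x] by simp
  let ?Q = "{t::real. t \<in> \<rat> \<and> 0 \<le> t} \<times> (UNIV :: nat set)"
  have cnt: "countable ?Q" by (intro countable_SIGMA countable_subset[OF _ countable_rat]) auto
  have U: "AE \<omega> in P x. \<forall>p\<in>?Q. \<omega> \<notin> {\<omega>\<in>\<Omega>. ennreal (fst p) < \<zeta> \<omega> \<and> yy x (fst p) + inverse (real (Suc (snd p))) < X (fst p) \<omega>}"
  proof (rule AE_ball_countable'[OF _ cnt])
    fix p assume p: "p \<in> ?Q"
    show "AE \<omega> in P x. \<omega> \<notin> {\<omega>\<in>\<Omega>. ennreal (fst p) < \<zeta> \<omega> \<and> yy x (fst p) + inverse (real (Suc (snd p))) < X (fst p) \<omega>}"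
      using p by (intro AE_not_in null_setsI upper_null x ev_gt_sets) auto
  qed
  show ?thesis
    using U lower_AE[OF x] AE_space
  proof eventually_elim
    case (elim \<omega>)
    have om: "\<omega> \<in> \<Omega>" using elim(3) sp by simp
    show ?case
    proof (intro allI impI)
      fix t :: real assume t: "0 \<le> t" "ennreal t < \<zeta> \<omega>"
      have lo: "yy x t \<le> X t \<omega>" using elim(2) t by simp
      have "X t \<omega> \<le> yy x t"
      proof (rule ccontr)
        assume "\<not> X t \<omega> \<le> yy x t"
        hence "0 < X t \<omega> - yy x t" by simp
        then obtain n where n: "inverse (real (Suc n)) < X t \<omega> - yy x t"
          using reals_Archimedean by blast
        hence lt: "yy x t + inverse (real (Suc n)) < X t \<omega>" by simp
        obtain r where r: "r \<in> \<rat>" "t < r" "r < t + 1" "ennreal r < \<zeta> \<omega>" "yy x t + inverse (real (Suc n)) < X r \<omega>"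
          using rat_near_gt[OF om t lt, of "t + 1"] by auto
        have "yy x r \<le> yy x t" using yy_anti[OF x t(1)] r(2) by simp
        hence "yy x r + inverse (real (Suc n)) < X r \<omega>" using r(5) by simp
        moreover have "(r, n) \<in> ?Q" using r t by simp
        ultimately show False using bspec[OF elim(1) \<open>(r, n) \<in> ?Q\<close>] om r(4) by simp
      qed
      thus "X t \<omega> = yy x t" using lo by simp
    qed
  qed
qed

lemma survival: assumes x: "x \<in> I" and t: "0 \<le> t"
  shows "measure (P x) {\<omega>\<in>space (P x). ennreal t < \<zeta> \<omega>}
              = exp (- (LINT s:{0..t}|lebesgue. w (inv_into I V (V x - s))))"
proof -
  interpret ps: prob_space "P x" using Pprop[OF x] by simp
  have sp: "space (P x) = \<Omega>" using Pprop[OF x] by simp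
  define l where "l = yy x t"
  have lI: "l \<in> I" and lV: "V l = V x - t" using yy[OF x t] l_def by auto
  have lx: "l \<le> x" using yy_le[OF x t] l_def by simp
  have ae: "AE \<omega> in P x. indicator {\<omega>. Tminus X \<zeta> l \<omega> < \<zeta> \<omega>} \<omega> = (indicator {\<omega>\<in>space (P x). ennreal t < \<zeta> \<omega>} \<omega> :: ennreal)"
    using path_AE[OF x] AE_space
  proof eventually_elim
    case (elim \<omega>)
    have om: "\<omega> \<in> \<Omega>" using elim(2) sp by simp
    have "Tminus X \<zeta> l \<omega> < \<zeta> \<omega> \<longleftrightarrow> ennreal t < \<zeta> \<omega>"
    proof
      assume "ennreal t < \<zeta> \<omega>"
      hence "t \<in> Sset l \<omega>" unfolding Sset_def using elim(1) t l_def by simp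
      hence "Tminus X \<zeta> l \<omega> \<le> ennreal t" by (rule T_le)
      thus "Tminus X \<zeta> l \<omega> < \<zeta> \<omega>" using \<open>ennreal t < \<zeta> \<omega>\<close> by simp
    next
      assume "Tminus X \<zeta> l \<omega> < \<zeta> \<omega>"
      then obtain s where "s \<in> Sset l \<omega>" using T_less_ex by blast
      hence s: "0 \<le> s" "ennreal s < \<zeta> \<omega>" "X s \<omega> \<le> l" unfolding Sset_def by auto
      have "yy x s \<le> yy x t" using elim(1) s l_def by simp
      hence "t \<le> s" using yy_strict[OF x s(1), of t] by force
      hence "ennreal t \<le> ennreal s" by (rule ennreal_leI)
      thus "ennreal t < \<zeta> \<omega>" using s(2) by simp
    qed
    thus ?case using elim(2) by (simp add: indicator_def)
  qed
  have "ennreal (cc x l) = (\<integral>\<^sup>+\<omega>. indicator {\<omega>. Tminus X \<zeta> l \<omega> < \<zeta> \<omega>} \<omega> \<partial>P x)"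
    using lap0[OF x lI lx] by simp
  also have "\<dots> = (\<integral>\<^sup>+\<omega>. indicator {\<omega>\<in>space (P x). ennreal t < \<zeta> \<omega>} \<omega> \<partial>P x)"
    by (rule nn_integral_cong_AE[OF ae])
  also have "\<dots> = emeasure (P x) {\<omega>\<in>space (P x). ennreal t < \<zeta> \<omega>}"
    using ev_alive_sets[OF x t] sp by simp
  also have "\<dots> = ennreal (measure (P x) {\<omega>\<in>space (P x). ennreal t < \<zeta> \<omega>})"
    using ps.emeasure_eq_measure .
  finally have "measure (P x) {\<omega>\<in>space (P x). ennreal t < \<zeta> \<omega>} = cc x l"
    using less_imp_le[OF cc_pos[of x l]] by (simp add: ennreal_inj)
  also have "cc x l = exp (- (LINT s:{0..t}|lebesgue. w (inv_into I V (V x - s))))"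
    unfolding cc_def using lV by simp
  finally show ?thesis .
qed

lemma main_conclusion: "\<forall>x\<in>I.
     (AE \<omega> in P x. \<forall>t\<ge>0. ennreal t < \<zeta> \<omega> \<longrightarrow> X t \<omega> = inv_into I V (V x - t)) \<and>
     (\<forall>t\<ge>0. measure (P x) {\<omega>\<in>space (P x). ennreal t < \<zeta> \<omega>}
              = exp (- (LINT s:{0..t}|lebesgue. w (inv_into I V (V x - s)))))"
  using path_AE survival unfolding yy_def by blast

end

theorem mainTheorem11:
  fixes I :: "real set" and \<Omega> :: "'w set" and F :: "real \<Rightarrow> 'w set set"
    and P :: "real \<Rightarrow> 'w measure" and X :: "real \<Rightarrow> 'w \<Rightarrow> real" and \<zeta> :: "'w \<Rightarrow> ennreal"
    and v w :: "real \<Rightarrow> real" and \<theta> :: real and V :: "real \<Rightarrow> real"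
  assumes setting: "standing_setting I \<Omega> F P X \<zeta>"
    and I_open: "open I"
    and no_neg_jumps: "as_surely I P (\<lambda>\<omega>. \<forall>t. 0 < t \<and> ennreal t < \<zeta> \<omega> \<longrightarrow>
                          Lim (at_left t) (\<lambda>s. X s \<omega>) \<le> X t \<omega>)"
    and v_meas: "v \<in> borel_measurable (restrict_space lebesgue I)"
    and v_pos: "\<forall>y\<in>I. 0 < v y"
    and w_meas: "w \<in> borel_measurable (restrict_space lebesgue I)"
    and w_nonneg: "\<forall>y\<in>I. 0 \<le> w y"
    and loc_int: "\<forall>a b. {a..b} \<subseteq> I \<longrightarrow> set_integrable lebesgue {a..b} (\<lambda>y. (1 + w y) / v y)"
    and diverge: "\<exists>x\<in>I. (\<integral>\<^sup>+y. indicator {y\<in>I. y \<le> x} y * ennreal (1 / v y) \<partial>lebesgue) = \<infinity>"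
    and theta: "\<theta> \<in> I"
    and V_def: "\<forall>a\<in>I. V a = Vscale v \<theta> a"
    and laplace: "\<forall>x\<in>I. \<forall>l\<in>I. l \<le> x \<longrightarrow> (\<forall>q\<ge>0.
         (\<integral>\<^sup>+\<omega>. indicator {\<omega>. Tminus X \<zeta> l \<omega> < \<zeta> \<omega>} \<omega>
                   * ennreal (exp (- q * enn2real (Tminus X \<zeta> l \<omega>))) \<partial>P x)
         = ennreal (exp (- (LINT t:{0..V x - V l}|lebesgue. w (inv_into I V (V x - t)))
                         - q * (V x - V l))))"
  shows "\<forall>x\<in>I.
     (AE \<omega> in P x. \<forall>t\<ge>0. ennreal t < \<zeta> \<omega> \<longrightarrow> X t \<omega> = inv_into I V (V x - t)) \<and>
     (\<forall>t\<ge>0. measure (P x) {\<omega>\<in>space (P x). ennreal t < \<zeta> \<omega>}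
              = exp (- (LINT s:{0..t}|lebesgue. w (inv_into I V (V x - s)))))"
proof -
  interpret thm_ctx I \<Omega> F P X \<zeta> v w \<theta> V
    by (rule thm_ctx.intro[OF setting I_open v_meas v_pos w_nonneg loc_int diverge theta V_def laplace])
  show ?thesis by (rule main_conclusion)
qed

end
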